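(* Let $I$ be a finite tree, $I=I^+\sqcup I^-$ its bipartition, $\Gamma_0$ the alternating orientation in which every vertex of $I^+$ is a source, $\Sigma_+=\prod_{i\in I^+}\Sigma_i$ and $\Sigma_-=\prod_{i\in I^-}\Sigma_i$ (each regarded as a morphism $\Gamma_0\to\Gamma_0^{\mathrm{op}}$ or $\Gamma_0^{\mathrm{op}}\to\Gamma_0$, as composability requires). Then: (a) the automorphism group $\mathrm{Aut}_{R_0(I)}(\Gamma_0)$ is generated by $\Sigma_+\Sigma_-$ and $\Sigma_-\Sigma_+$; (b) the automorphism group $\mathrm{Aut}_{R(I)}(\Gamma_0)$ is generated by $D\Sigma_+$ and $D\Sigma_-$.
   Context: Let $I$ be a finite tree (connected, acyclic finite graph). $\mathrm{Quiv}(I)$ is the set of orientations of $I$. For $\Gamma\in\mathrm{Quiv}(I)$ and a vertex $i$ that is a source or sink of $\Gamma$, $s_i\Gamma$ is the orientation obtained by reversing all arrows at $i$; $\Gamma^{\mathrm{op}}$ is obtained by reversing all arrows. The groupoid $R_0(I)$ has object set $\mathrm{Quiv}(I)$ and is generated by elementary isomorphisms $\Sigma_i:\Gamma\to s_i\Gamma$ (one for each $\Gamma$ and each source or sink $i$ of $\Gamma$), subject to the relations (whenever both sides are defined): (R1) $\Sigma_i^2=1$; (R2) $\Sigma_i\Sigma_j=\Sigma_j\Sigma_i$ whenever $i,j$ are not adjacent in $I$. The groupoid $R(I)$ has the same objects and is generated by the $\Sigma_i$ together with elementary isomorphisms $D:\Gamma\to\Gamma^{\mathrm{op}}$ for all $\Gamma$,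 subject to (R1), (R2) and (R3) $D^2=1$, (R4) $D\Sigma_i=\Sigma_iD$ for all $i$ (whenever defined). Composition is written right-to-left (in $\Sigma_i\Sigma_j$, $\Sigma_j$ is applied first). $I=I^+\sqcup I^-$ is a decomposition into two subsets with no edges inside either subset (unique up to swapping). Products $\Sigma_\pm$ are independent of the order by (R2). *)

theory Defs
  imports Main
begin

definition simple_graph :: "'v set \<Rightarrow> ('v \<times> 'v) set \<Rightarrow> bool" where
  "simple_graph V E \<longleftrightarrow> finite V \<and> E \<subseteq> V \<times> V \<and> sym E \<and> (\<forall>v. (v, v) \<notin> E)"

definition is_cycle :: "('v \<times> 'v) set \<Rightarrow> 'v list \<Rightarrow> bool" where
  "is_cycle E cs \<longleftrightarrow> 3 \<le> length cs \<and> distinct cs \<and>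
     (\<forall>k. Suc k < length cs \<longrightarrow> (cs ! k, cs ! Suc k) \<in> E) \<and> (last cs, hd cs) \<in> E"

definition is_tree :: "'v set \<Rightarrow> ('v \<times> 'v) set \<Rightarrow> bool" where
  "is_tree V E \<longleftrightarrow> simple_graph V E \<and> V \<noteq> {} \<and>
     (\<forall>u\<in>V. \<forall>v\<in>V. (u, v) \<in> E\<^sup>*) \<and> \<not> (\<exists>cs. is_cycle E cs)"

definition is_orientation :: "('v \<times> 'v) set \<Rightarrow> ('v \<times> 'v) set \<Rightarrow> bool" where
  "is_orientation E Q \<longleftrightarrow> Q \<subseteq> E \<and> (\<forall>(a, b)\<in>E. (a, b) \<in> Q \<longleftrightarrow> (b, a) \<notin> Q)"

definition is_source :: "'v set \<Rightarrow> ('v \<times> 'v) set \<Rightarrow> 'v \<Rightarrow> bool" where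
  "is_source V Q i \<longleftrightarrow> i \<in> V \<and> (\<forall>a. (a, i) \<notin> Q)"

definition is_sink :: "'v set \<Rightarrow> ('v \<times> 'v) set \<Rightarrow> 'v \<Rightarrow> bool" where
  "is_sink V Q i \<longleftrightarrow> i \<in> V \<and> (\<forall>b. (i, b) \<notin> Q)"

definition refl_at :: "'v \<Rightarrow> ('v \<times> 'v) set \<Rightarrow> ('v \<times> 'v) set" where
  "refl_at i Q = {(a, b). if a = i \<or> b = i then (b, a) \<in> Q else (a, b) \<in> Q}"

datatype 'v gen = Sg 'v | Dg

text \<open>A letter is a generator label together with a flag: True means the formal inverse.
  Words are listed in order of application (first applied first).\<close>
type_synonym 'v letter = "'v gen \<times> bool"

fun act :: "'v gen \<Rightarrow> ('v \<times> 'v) set \<Rightarrow> ('v \<times> 'v) set" where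
  "act (Sg i) Q = refl_at i Q"
| "act Dg Q = Q\<inverse>"

text \<open>Whether the elementary isomorphism with given label is defined out of Q (resp. its formal
  inverse, which goes out of Q exactly when the generator goes into Q, i.e. under the same
  condition); allowD distinguishes R(I) (True) from R_0(I) (False).\<close>
fun gen_ok :: "'v set \<Rightarrow> bool \<Rightarrow> ('v \<times> 'v) set \<Rightarrow> 'v gen \<Rightarrow> bool" where
  "gen_ok V allowD Q (Sg i) \<longleftrightarrow> is_source V Q i \<or> is_sink V Q i"
| "gen_ok V allowD Q Dg \<longleftrightarrow> allowD"

fun walk :: "('v \<times> 'v) set \<Rightarrow> 'v letter list \<Rightarrow> ('v \<times> 'v) set" where
  "walk Q [] = Q"
| "walk Q (x # xs) = walk (act (fst x) Q) xs"

fun valid :: "'v set \<Rightarrow> bool \<Rightarrow> ('v \<times> 'v) set \<Rightarrow> 'v letter list \<Rightarrow> bool" where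
  "valid V allowD Q [] = True"
| "valid V allowD Q (x # xs) \<longleftrightarrow> gen_ok V allowD Q (fst x) \<and> valid V allowD (act (fst x) Q) xs"

text \<open>Defining relations, as pairs of words starting at Q: free groupoid relations
  (x x^-1 = 1, x^-1 x = 1), and (R1)-(R4) (R3, R4 only if allowD).
  Composition Sigma_i Sigma_j (right-to-left) is the word [Sg j, Sg i].\<close>
definition rel :: "'v set \<Rightarrow> ('v \<times> 'v) set \<Rightarrow> bool \<Rightarrow> ('v \<times> 'v) set
                    \<Rightarrow> 'v letter list \<Rightarrow> 'v letter list \<Rightarrow> bool" where
  "rel V E allowD Q u v \<longleftrightarrow>
     (\<exists>g b. u = [(g, b), (g, \<not> b)] \<and> v = [] \<and> valid V allowD Q u)
   \<or> (\<exists>i. u = [(Sg i, False), (Sg i, False)] \<and> v = [] \<and> valid V allowD Q u)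
   \<or> (\<exists>i j. (i, j) \<notin> E \<and> u = [(Sg j, False), (Sg i, False)] \<and> v = [(Sg i, False), (Sg j, False)]
           \<and> valid V allowD Q u \<and> valid V allowD Q v)
   \<or> (allowD \<and> u = [(Dg, False), (Dg, False)] \<and> v = [] \<and> valid V allowD Q u)
   \<or> (allowD \<and> (\<exists>i. u = [(Sg i, False), (Dg, False)] \<and> v = [(Dg, False), (Sg i, False)]
           \<and> valid V allowD Q u \<and> valid V allowD Q v))"

definition wstep :: "'v set \<Rightarrow> ('v \<times> 'v) set \<Rightarrow> bool \<Rightarrow> ('v \<times> 'v) set
                     \<Rightarrow> 'v letter list \<Rightarrow> 'v letter list \<Rightarrow> bool" where
  "wstep V E allowD Q w w' \<longleftrightarrow> valid V allowD Q w \<and>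
     (\<exists>a u v c. w = a @ u @ c \<and> w' = a @ v @ c \<and> rel V E allowD (walk Q a) u v)"

text \<open>Equality of morphisms out of Q: the equivalence closure of rewriting steps.\<close>
definition wequiv :: "'v set \<Rightarrow> ('v \<times> 'v) set \<Rightarrow> bool \<Rightarrow> ('v \<times> 'v) set
                      \<Rightarrow> 'v letter list \<Rightarrow> 'v letter list \<Rightarrow> bool" where
  "wequiv V E allowD Q = (\<lambda>x y. wstep V E allowD Q x y \<or> wstep V E allowD Q y x)\<^sup>*\<^sup>*"

definition inv_word :: "'v letter list \<Rightarrow> 'v letter list" where
  "inv_word w = rev (map (\<lambda>(g, b). (g, \<not> b)) w)"

text \<open>The automorphism group of Q (valid loops at Q modulo wequiv) is generated by the given loops.\<close>
definition generates_aut :: "'v set \<Rightarrow> ('v \<times> 'v) set \<Rightarrow> bool \<Rightarrow> ('v \<times> 'v) set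
                             \<Rightarrow> 'v letter list list \<Rightarrow> bool" where
  "generates_aut V E allowD Q gs \<longleftrightarrow>
     (\<forall>g\<in>set gs. valid V allowD Q g \<and> walk Q g = Q) \<and>
     (\<forall>w. valid V allowD Q w \<and> walk Q w = Q \<longrightarrow>
        (\<exists>ws. set ws \<subseteq> set gs \<union> inv_word ` set gs \<and> wequiv V E allowD Q w (concat ws)))"

end

theory Submission
  imports Defs
begin
lemma walk_append[simp]: "walk Q (xs @ ys) = walk (walk Q xs) ys"
  by (induction xs arbitrary: Q) auto

lemma valid_append[simp]: "valid V D Q (xs @ ys) \<longleftrightarrow> valid V D Q xs \<and> valid V D (walk Q xs) ys"
  by (induction xs arbitrary: Q) auto

lemma mem_refl_at: "(a, b) \<in> refl_at i X \<longleftrightarrow> (if a = i \<or> b = i then (b, a) \<in> X else (a, b) \<in> X)"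
  unfolding refl_at_def by simp

lemma refl_at_invol[simp]: "refl_at i (refl_at i Q) = Q"
proof (rule set_eqI)
  fix x show "x \<in> refl_at i (refl_at i Q) \<longleftrightarrow> x \<in> Q"
    by (cases x) (simp add: mem_refl_at)
qed

lemma refl_at_comm: "refl_at i (refl_at j Q) = refl_at j (refl_at i Q)"
proof (rule set_eqI)
  fix x show "x \<in> refl_at i (refl_at j Q) \<longleftrightarrow> x \<in> refl_at j (refl_at i Q)"
    by (cases x) (simp add: mem_refl_at)
qed

lemma refl_at_conv: "refl_at i (Q\<inverse>) = (refl_at i Q)\<inverse>"
proof (rule set_eqI)
  fix x show "x \<in> refl_at i (Q\<inverse>) \<longleftrightarrow> x \<in> (refl_at i Q)\<inverse>"
    by (cases x) (simp add: mem_refl_at)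
qed

lemma act_invol[simp]: "act g (act g Q) = Q"
  by (cases g) auto

lemma gen_ok_act[simp]: "gen_ok V D (act g Q) g = gen_ok V D Q g"
  by (cases g) (auto simp: is_source_def is_sink_def mem_refl_at)

lemma source_conv[simp]: "is_source V (Q\<inverse>) i = is_sink V Q i"
  and sink_conv[simp]: "is_sink V (Q\<inverse>) i = is_source V Q i"
  by (auto simp: is_source_def is_sink_def)

lemma source_refl[simp]: "is_source V (refl_at i Q) i = is_sink V Q i"
  and sink_refl[simp]: "is_sink V (refl_at i Q) i = is_source V Q i"
  by (auto simp: is_source_def is_sink_def mem_refl_at)

lemma gen_ok_conv[simp]: "gen_ok V D (Q\<inverse>) g = gen_ok V D Q g"
  by (cases g) (auto simp: is_source_def is_sink_def)

lemma rel_walk: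
  assumes "rel V E D Q u v"
  shows "valid V D Q u \<and> valid V D Q v \<and> walk Q u = walk Q v"
  using assms unfolding rel_def
  by (elim disjE exE conjE) (auto simp: refl_at_comm refl_at_conv)

lemma wstep_walk:
  assumes "wstep V E D Q w w'"
  shows "valid V D Q w' \<and> walk Q w' = walk Q w"
proof -
  from assms obtain a u v c where w: "w = a @ u @ c" "w' = a @ v @ c"
    and r: "rel V E D (walk Q a) u v" and vw: "valid V D Q w"
    unfolding wstep_def by blast
  from rel_walk[OF r] vw w show ?thesis by auto
qed

lemma wequiv_walk:
  assumes "wequiv V E D Q w w'" and "valid V D Q w"
  shows "valid V D Q w' \<and> walk Q w' = walk Q w"
  using assms(1) unfolding wequiv_def
proof (induction rule: rtranclp_induct)
  case base
  then show ?case using assms(2) by simp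
next
  case (step y z)
  from step.IH have wy: "walk Q y = walk Q w" by auto
  from step.hyps(2) show ?case
  proof
    assume h: "wstep V E D Q y z" then show ?thesis using wstep_walk[OF h] wy by simp
  next
    assume h: "wstep V E D Q z y"
    then have "valid V D Q z" unfolding wstep_def by blast
    moreover have "walk Q y = walk Q z" using wstep_walk[OF h] by simp
    ultimately show ?thesis using wy by simp
  qed
qed

lemma wequiv_refl[simp]: "wequiv V E D Q w w"
  unfolding wequiv_def by simp

lemma wequiv_sym:
  assumes "wequiv V E D Q w w'"
  shows "wequiv V E D Q w' w"
proof -
  have "(\<lambda>x y. wstep V E D Q x y \<or> wstep V E D Q y x)\<inverse>\<inverse> = (\<lambda>x y. wstep V E D Q x y \<or> wstep V E D Q y x)"
    by (auto simp: fun_eq_iff)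
  then show ?thesis using rtranclp_converseI[OF assms[unfolded wequiv_def]] unfolding wequiv_def by metis
qed

lemma wequiv_trans:
  "wequiv V E D Q u v \<Longrightarrow> wequiv V E D Q v w \<Longrightarrow> wequiv V E D Q u w"
  unfolding wequiv_def by (rule rtranclp_trans)

lemma wstep_ctx:
  assumes "wstep V E D (walk Q a) u v" and "valid V D Q (a @ u @ c)"
  shows "wstep V E D Q (a @ u @ c) (a @ v @ c)"
proof -
  from assms(1) obtain a' u' v' c' where "u = a' @ u' @ c'" "v = a' @ v' @ c'"
    and r: "rel V E D (walk (walk Q a) a') u' v'"
    unfolding wstep_def by blast
  then have "a @ u @ c = (a @ a') @ u' @ (c' @ c)" "a @ v @ c = (a @ a') @ v' @ (c' @ c)"
    and "rel V E D (walk Q (a @ a')) u' v'" by auto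
  then show ?thesis using assms(2) unfolding wstep_def by blast
qed

lemma wequiv_ctx:
  assumes "wequiv V E D (walk Q a) u v" and "valid V D Q (a @ u @ c)"
  shows "wequiv V E D Q (a @ u @ c) (a @ v @ c)"
  using assms(1) unfolding wequiv_def
proof (induction rule: rtranclp_induct)
  case base then show ?case by simp
next
  case (step y z)
  have vy: "valid V D (walk Q a) y \<and> walk (walk Q a) y = walk (walk Q a) u"
    using wequiv_walk[of V E D "walk Q a" u y] step(1) assms(2) unfolding wequiv_def by auto
  then have vay: "valid V D Q (a @ y @ c)" using assms(2) by auto
  from step(2) show ?case
  proof
    assume "wstep V E D (walk Q a) y z"
    then have "wstep V E D Q (a @ y @ c) (a @ z @ c)" using wstep_ctx vay by blast
    then show ?thesis using step(3) rtranclp.rtrancl_into_rtrancl[of _ "a@u@c" "a@y@c" "a@z@c"] by blast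
  next
    assume h: "wstep V E D (walk Q a) z y"
    then have "valid V D (walk Q a) z \<and> walk (walk Q a) z = walk (walk Q a) y"
      using wstep_walk[OF h] unfolding wstep_def by auto
    then have "valid V D Q (a @ z @ c)" using vay by auto
    then have "wstep V E D Q (a @ z @ c) (a @ y @ c)" using wstep_ctx h by blast
    then show ?thesis using step(3) rtranclp.rtrancl_into_rtrancl[of _ "a@u@c" "a@y@c" "a@z@c"] by blast
  qed
qed

lemma rel_wequiv:
  assumes "rel V E D (walk Q a) u v" and "valid V D Q (a @ u @ c)"
  shows "wequiv V E D Q (a @ u @ c) (a @ v @ c)"
  using assms unfolding wequiv_def wstep_def by blast

lemma wequiv_mono:
  assumes "wequiv V E False Q u v"
  shows "wequiv V E True Q u v"
proof -
  have vm: "valid V False Q w \<Longrightarrow> valid V True Q w" for Q w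
  proof (induction w arbitrary: Q)
    case (Cons x w) then show ?case by (cases "fst x") auto
  qed simp
  have rm: "rel V E False Q u v \<Longrightarrow> rel V E True Q u v" for Q u v
    unfolding rel_def using vm by blast
  have sm: "wstep V E False Q u v \<Longrightarrow> wstep V E True Q u v" for u v
    unfolding wstep_def using vm rm by blast
  show ?thesis using assms unfolding wequiv_def
  proof (induction rule: rtranclp_induct)
    case (step y z)
    then have "wstep V E True Q y z \<or> wstep V E True Q z y" using sm by blast
    then show ?case using step(3) rtranclp.rtrancl_into_rtrancl[of _ u y z] by blast
  qed simp
qed

definition wd :: "'v list \<Rightarrow> 'v letter list" where
  "wd xs = map (\<lambda>i. (Sg i, False)) xs"

definition dp :: "nat \<Rightarrow> 'v letter list" where
  "dp n = (if even n then [] else [(Dg, False)])"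

fun sgs :: "'v letter list \<Rightarrow> 'v list" where
  "sgs [] = []"
| "sgs ((Sg i, b) # w) = i # sgs w"
| "sgs ((Dg, b) # w) = sgs w"

fun nd :: "'v letter list \<Rightarrow> nat" where
  "nd [] = 0"
| "nd ((Sg i, b) # w) = nd w"
| "nd ((Dg, b) # w) = Suc (nd w)"

lemma wd_simps[simp]: "wd [] = []" "wd (i # xs) = (Sg i, False) # wd xs" "wd (xs @ ys) = wd xs @ wd ys"
  unfolding wd_def by auto

lemma sgs_append[simp]: "sgs (xs @ ys) = sgs xs @ sgs ys"
  by (induction xs rule: sgs.induct) auto

lemma nd_append[simp]: "nd (xs @ ys) = nd xs + nd ys"
  by (induction xs rule: nd.induct) auto

lemma sgs_wd[simp]: "sgs (wd xs) = xs" and nd_wd[simp]: "nd (wd xs) = 0"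
  by (induction xs) auto

lemma rel_free: "valid V D Q [(g,b),(g,\<not>b)] \<Longrightarrow> rel V E D Q [(g,b),(g,\<not>b)] []"
  unfolding rel_def by blast
lemma rel_R1: "valid V D Q [(Sg i,False),(Sg i,False)] \<Longrightarrow> rel V E D Q [(Sg i,False),(Sg i,False)] []"
  unfolding rel_def by blast
lemma rel_R2: "(i, j) \<notin> E \<Longrightarrow> valid V D Q [(Sg j, False), (Sg i, False)] \<Longrightarrow> valid V D Q [(Sg i, False), (Sg j, False)]
  \<Longrightarrow> rel V E D Q [(Sg j, False), (Sg i, False)] [(Sg i, False), (Sg j, False)]"
  unfolding rel_def by blast
lemma rel_R3: "D \<Longrightarrow> rel V E D Q [(Dg,False),(Dg,False)] []"
  unfolding rel_def by simp
lemma rel_R4: "D \<Longrightarrow> valid V D Q [(Sg i, False), (Dg, False)] \<Longrightarrow> valid V D Q [(Dg, False), (Sg i, False)]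
  \<Longrightarrow> rel V E D Q [(Sg i, False), (Dg, False)] [(Dg, False), (Sg i, False)]"
  unfolding rel_def by blast

lemma letter_pos:
  assumes "valid V D Q (a @ (g, b) # c)"
  shows "wequiv V E D Q (a @ (g, b) # c) (a @ (g, False) # c)"
proof (cases b)
  case False then show ?thesis by simp
next
  case True
  let ?Q1 = "walk Q a"
  have ok: "gen_ok V D ?Q1 g" and vc: "valid V D (act g ?Q1) c" using assms by auto
  have r1: "rel V E D (act g ?Q1) [(g,False),(g,False)] []"
  proof (cases g)
    case (Sg i) then show ?thesis using ok rel_R1[of V D "act g ?Q1" i E] by (simp; blast)
  next
    case Dg then show ?thesis using ok rel_R3[of D V E "act g ?Q1"] by simp
  qed
  have s1: "wequiv V E D Q ((a @ [(g,b)]) @ [(g,False),(g,False)] @ c) ((a @ [(g,b)]) @ [] @ c)"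
    by (rule rel_wequiv) (use r1 ok vc assms in auto)
  have r2: "rel V E D ?Q1 [(g,True),(g,False)] []"
    using rel_free[of V D ?Q1 g True E] ok by simp
  have s2: "wequiv V E D Q (a @ [(g,True),(g,False)] @ ((g,False) # c)) (a @ [] @ ((g,False) # c))"
    by (rule rel_wequiv) (use r2 ok vc assms in auto)
  have s1': "wequiv V E D Q (a @ (g,b) # c) (a @ (g,b) # (g,False) # (g,False) # c)"
    using wequiv_sym[OF s1] by simp
  have s2': "wequiv V E D Q (a @ (g,b) # (g,False) # (g,False) # c) (a @ (g,False) # c)"
    using s2 True by simp
  show ?thesis by (rule wequiv_trans[OF s1' s2'])
qed

lemma push_D:
  assumes D: "D" and "valid V D Q ((Dg,False) # wd xs @ c)"
  shows "wequiv V E D Q ((Dg,False) # wd xs @ c) (wd xs @ (Dg,False) # c)"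
  using assms(2)
proof (induction xs arbitrary: Q)
  case Nil then show ?case by simp
next
  case (Cons i xs)
  let ?u = "[(Sg i,False),(Dg,False)]" and ?v = "[(Dg,False),(Sg i,False)]"
  have vv: "valid V D Q (?v @ (wd xs @ c))" using Cons.prems by (simp only: wd_simps append_Cons append_Nil)
  have "is_source V Q i \<or> is_sink V Q i" using vv by (simp; blast)
  then have vu0: "valid V D Q ?u" using D by simp
  have vv0: "valid V D Q ?v" using vv by simp
  have r: "rel V E D Q ?u ?v" using rel_R4[OF D vu0 vv0] .
  have vu: "valid V D Q ([] @ ?u @ (wd xs @ c))"
    using D rel_walk[OF r] vv by simp
  have 1: "wequiv V E D Q ([] @ ?u @ (wd xs @ c)) ([] @ ?v @ (wd xs @ c))"
    by (rule rel_wequiv[OF _ vu]) (use r in simp)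
  have v2: "valid V D (refl_at i Q) ((Dg,False) # wd xs @ c)"
    using vu by (simp only: append_Nil append_Cons valid.simps act.simps fst_conv; blast)
  have 2: "wequiv V E D (refl_at i Q) ((Dg,False) # wd xs @ c) (wd xs @ (Dg,False) # c)"
    using Cons.IH[OF v2] .
  have 3: "wequiv V E D Q ([(Sg i,False)] @ ((Dg,False) # wd xs @ c) @ []) ([(Sg i,False)] @ (wd xs @ (Dg,False) # c) @ [])"
    by (rule wequiv_ctx) (use 2 in simp, use vu in \<open>simp only: append_Nil append_Cons append_Nil2 append_assoc\<close>)
  show ?case using wequiv_trans[OF wequiv_sym[OF 1[simplified]] 3[simplified]] by simp
qed

lemma normalize:
  "valid V D Q w \<Longrightarrow> wequiv V E D Q w (wd (sgs w) @ dp (nd w))"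
proof (induction w arbitrary: Q)
  case Nil then show ?case by (simp add: dp_def)
next
  case (Cons x w)
  obtain g b where x: "x = (g,b)" by force
  have ok: "gen_ok V D Q g" and vw: "valid V D (act g Q) w" using Cons.prems x by auto
  have IH: "wequiv V E D (act g Q) w (wd (sgs w) @ dp (nd w))" using Cons.IH vw .
  have 1: "wequiv V E D Q ([(g,b)] @ w @ []) ([(g,b)] @ (wd (sgs w) @ dp (nd w)) @ [])"
    by (rule wequiv_ctx) (use IH Cons.prems x in auto)
  have v1: "valid V D Q ((g,b) # wd (sgs w) @ dp (nd w))"
    using wequiv_walk[OF 1] Cons.prems x by simp
  have 2: "wequiv V E D Q ([] @ (g,b) # (wd (sgs w) @ dp (nd w))) ([] @ (g,False) # (wd (sgs w) @ dp (nd w)))"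
    by (rule letter_pos) (use v1 in simp)
  have 12: "wequiv V E D Q (x # w) ((g,False) # wd (sgs w) @ dp (nd w))"
    using wequiv_trans[OF 1[simplified] 2[simplified]] x by simp
  show ?case
  proof (cases g)
    case (Sg i) then show ?thesis using 12 x by simp
  next
    case Dg
    then have DT0: "D" using ok by simp
    have "valid V D Q ((g,False) # wd (sgs w) @ dp (nd w))"
      using wequiv_walk[OF 12 Cons.prems] by blast
    then have v2: "valid V D Q ((Dg,False) # wd (sgs w) @ dp (nd w))"
      using Dg by blast
    have 3: "wequiv V E D Q ((Dg,False) # wd (sgs w) @ dp (nd w)) (wd (sgs w) @ (Dg,False) # dp (nd w))"
      using push_D[OF DT0 v2] .
    have v3: "valid V D Q (wd (sgs w) @ (Dg,False) # dp (nd w))"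
      using wequiv_walk[OF 3 v2] by blast
    have 4: "wequiv V E D Q (wd (sgs w) @ (Dg,False) # dp (nd w)) (wd (sgs w) @ dp (Suc (nd w)))"
    proof (cases "even (nd w)")
      case True then show ?thesis by (simp add: dp_def)
    next
      case False
      have r: "rel V E D (walk Q (wd (sgs w))) [(Dg,False),(Dg,False)] []"
        using DT0 by (rule rel_R3)
      have "wequiv V E D Q (wd (sgs w) @ [(Dg,False),(Dg,False)] @ []) (wd (sgs w) @ [] @ [])"
        by (rule rel_wequiv[OF r]) (use DT0 v3 False in \<open>simp add: dp_def\<close>)
      then show ?thesis using False by (simp add: dp_def)
    qed
    show ?thesis using wequiv_trans[OF wequiv_trans[OF 12[unfolded Dg] 3] 4] x Dg by simp
  qed
qed

definition ori :: "('v \<times> 'v) set \<Rightarrow> ('v \<Rightarrow> int) \<Rightarrow> ('v \<times> 'v) set" where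
  "ori E H = {(a, b). (a, b) \<in> E \<and> H b = H a + 1}"

definition up :: "('v \<times> 'v) set \<Rightarrow> ('v \<Rightarrow> int) \<Rightarrow> 'v \<Rightarrow> bool" where
  "up E H i \<longleftrightarrow> (\<forall>j. (i, j) \<in> E \<longrightarrow> H j = H i + 1)"

definition dn :: "('v \<times> 'v) set \<Rightarrow> ('v \<Rightarrow> int) \<Rightarrow> 'v \<Rightarrow> bool" where
  "dn E H i \<longleftrightarrow> (\<forall>j. (i, j) \<in> E \<longrightarrow> H j = H i - 1)"

definition mvable :: "'v set \<Rightarrow> ('v \<times> 'v) set \<Rightarrow> ('v \<Rightarrow> int) \<Rightarrow> 'v \<Rightarrow> bool" where
  "mvable V E H i \<longleftrightarrow> i \<in> V \<and> (up E H i \<or> dn E H i)"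

definition mv :: "('v \<times> 'v) set \<Rightarrow> 'v \<Rightarrow> ('v \<Rightarrow> int) \<Rightarrow> ('v \<Rightarrow> int)" where
  "mv E i H = (if up E H i then H(i := H i + 2) else H(i := H i - 2))"

fun lift :: "('v \<times> 'v) set \<Rightarrow> ('v \<Rightarrow> int) \<Rightarrow> 'v list \<Rightarrow> ('v \<Rightarrow> int)" where
  "lift E H [] = H"
| "lift E H (i # xs) = lift E (mv E i H) xs"

fun path :: "'v set \<Rightarrow> ('v \<times> 'v) set \<Rightarrow> ('v \<Rightarrow> int) \<Rightarrow> 'v list \<Rightarrow> bool" where
  "path V E H [] = True"
| "path V E H (i # xs) \<longleftrightarrow> mvable V E H i \<and> path V E (mv E i H) xs"

definition gd :: "('v \<times> 'v) set \<Rightarrow> ('v \<Rightarrow> int) \<Rightarrow> bool" where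
  "gd E H \<longleftrightarrow> (\<forall>a b. (a, b) \<in> E \<longrightarrow> H a = H b + 1 \<or> H b = H a + 1)"

lemma mem_ori[simp]: "(a, b) \<in> ori E H \<longleftrightarrow> (a, b) \<in> E \<and> H b = H a + 1"
  unfolding ori_def by simp

lemma lift_append[simp]: "lift E H (xs @ ys) = lift E (lift E H xs) ys"
  by (induction xs arbitrary: H) auto

lemma path_append[simp]: "path V E H (xs @ ys) \<longleftrightarrow> path V E H xs \<and> path V E (lift E H xs) ys"
  by (induction xs arbitrary: H) auto

locale tc =
  fixes V :: "'v set" and E :: "('v \<times> 'v) set"
  assumes finV: "finite V" and EV: "E \<subseteq> V \<times> V" and symE: "\<And>a b. (a, b) \<in> E \<Longrightarrow> (b, a) \<in> E"
    and irrE: "\<And>v. (v, v) \<notin> E"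
    and nonisol: "\<And>v. v \<in> V \<Longrightarrow> \<exists>u. (v, u) \<in> E"
begin

lemma mv_nbr:
  assumes "mvable V E H i" "(i, j) \<in> E"
  shows "mv E i H i = H i + 2 \<and> H j = H i + 1 \<or> mv E i H i = H i - 2 \<and> H j = H i - 1"
  using assms unfolding mvable_def mv_def up_def dn_def by auto

lemma mv_other[simp]: "k \<noteq> i \<Longrightarrow> mv E i H k = H k"
  unfolding mv_def by auto

lemma gd_mv:
  assumes "gd E H" "mvable V E H i"
  shows "gd E (mv E i H)"
  unfolding gd_def
proof (intro allI impI)
  fix a b assume ab: "(a, b) \<in> E"
  have ne: "a \<noteq> b" using ab irrE by auto
  show "mv E i H a = mv E i H b + 1 \<or> mv E i H b = mv E i H a + 1"
  proof (cases "a = i")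
    case True
    then show ?thesis using mv_nbr[OF assms(2), of b] ab ne by auto
  next
    case False
    show ?thesis
    proof (cases "b = i")
      case True
      then show ?thesis using mv_nbr[OF assms(2), of a] symE[OF ab] ne by auto
    next
      case False
      then show ?thesis using \<open>a \<noteq> i\<close> assms(1) ab unfolding gd_def by simp
    qed
  qed
qed

lemma source_ori:
  assumes "gd E H"
  shows "is_source V (ori E H) i \<longleftrightarrow> i \<in> V \<and> up E H i"
proof -
  have "(\<forall>a. (a, i) \<notin> ori E H) \<longleftrightarrow> up E H i"
  proof
    assume h: "\<forall>a. (a, i) \<notin> ori E H"
    show "up E H i" unfolding up_def
    proof (intro allI impI)
      fix j assume "(i, j) \<in> E"
      then have "(j, i) \<in> E" "H i = H j + 1 \<or> H j = H i + 1" using symE[of i j] assms unfolding gd_def by auto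
      moreover have "\<not> (H i = H j + 1)" using h \<open>(j, i) \<in> E\<close> by auto
      ultimately show "H j = H i + 1" by blast
    qed
  next
    assume u: "up E H i"
    show "\<forall>a. (a, i) \<notin> ori E H"
    proof (intro allI notI)
      fix a assume "(a, i) \<in> ori E H"
      then have "(i, a) \<in> E" "H i = H a + 1" using symE[of a i] by auto
      then show False using u unfolding up_def by force
    qed
  qed
  then show ?thesis unfolding is_source_def by blast
qed

lemma sink_ori:
  assumes "gd E H"
  shows "is_sink V (ori E H) i \<longleftrightarrow> i \<in> V \<and> dn E H i"
proof -
  have "(\<forall>b. (i, b) \<notin> ori E H) \<longleftrightarrow> dn E H i"
  proof
    assume h: "\<forall>b. (i, b) \<notin> ori E H"
    show "dn E H i" unfolding dn_def
    proof (intro allI impI)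
      fix j assume "(i, j) \<in> E"
      then have "H i = H j + 1 \<or> H j = H i + 1" using assms unfolding gd_def by auto
      moreover have "\<not> (H j = H i + 1)" using h \<open>(i, j) \<in> E\<close> by auto
      ultimately show "H j = H i - 1" by auto
    qed
  next
    assume "dn E H i"
    then show "\<forall>b. (i, b) \<notin> ori E H" unfolding dn_def by force
  qed
  then show ?thesis unfolding is_sink_def by blast
qed

lemma gen_ok_ori:
  assumes "gd E H"
  shows "gen_ok V D (ori E H) (Sg i) \<longleftrightarrow> mvable V E H i"
  using source_ori[OF assms] sink_ori[OF assms] unfolding mvable_def by auto

lemma ori_mv:
  assumes "gd E H" "mvable V E H i"
  shows "refl_at i (ori E H) = ori E (mv E i H)"
proof (rule set_eqI)
  fix x
  obtain a b :: 'v where x: "x = (a, b)" by force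
  have "(a, b) \<in> refl_at i (ori E H) \<longleftrightarrow> (a, b) \<in> ori E (mv E i H)"
  proof (cases "a = i")
    case ai: True
    show ?thesis
    proof (cases "(i, b) \<in> E")
      case False
      then have "(b, i) \<notin> E" using symE[of b i] by blast
      then show ?thesis using False ai by (simp add: mem_refl_at)
    next
      case True
      then have "(b, i) \<in> E" "b \<noteq> i" using symE[of i b] irrE[of i] by auto
      moreover note mv_nbr[OF assms(2) True]
      ultimately show ?thesis using True ai by (elim disjE) (simp_all add: mem_refl_at)
    qed
  next
    case ai: False
    show ?thesis
    proof (cases "b = i")
      case bi: True
      show ?thesis
      proof (cases "(i, a) \<in> E")
        case False
        then have "(a, i) \<notin> E" using symE[of a i] by blast
        then show ?thesis using False bi by (simp add: mem_refl_at)
      next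
        case True
        then have "(a, i) \<in> E" using symE[of i a] by auto
        moreover note mv_nbr[OF assms(2) True]
        ultimately show ?thesis using True ai bi by (elim disjE) (simp_all add: mem_refl_at)
      qed
    next
      case False
      then show ?thesis using ai by (simp add: mem_refl_at)
    qed
  qed
  then show "x \<in> refl_at i (ori E H) \<longleftrightarrow> x \<in> ori E (mv E i H)" using x by simp
qed

lemma path_valid:
  assumes "gd E H"
  shows "valid V D (ori E H) (wd p) \<longleftrightarrow> path V E H p"
  using assms
proof (induction p arbitrary: H)
  case (Cons i p)
  show ?case
  proof (cases "mvable V E H i")
    case True
    then show ?thesis using Cons.IH[OF gd_mv[OF Cons.prems True]] gen_ok_ori[OF Cons.prems]
        ori_mv[OF Cons.prems True] by simp
  next
    case False
    then show ?thesis using gen_ok_ori[OF Cons.prems] by simp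
  qed
qed simp

lemma path_walk:
  assumes "gd E H" "path V E H p"
  shows "walk (ori E H) (wd p) = ori E (lift E H p) \<and> gd E (lift E H p)"
  using assms
proof (induction p arbitrary: H)
  case (Cons i p)
  have m: "mvable V E H i" and p: "path V E (mv E i H) p" using Cons.prems by auto
  show ?case using Cons.IH[OF gd_mv[OF Cons.prems(1) m] p] ori_mv[OF Cons.prems(1) m] by simp
qed simp

lemma mv_self: "mv E i H i = (if up E H i then H i + 2 else H i - 2)"
  unfolding mv_def by simp

lemma mv_back:
  assumes "gd E H" "mvable V E H i"
  shows "mvable V E (mv E i H) i \<and> mv E i (mv E i H) = H"
proof -
  have iV: "i \<in> V" using assms(2) unfolding mvable_def by auto
  obtain j where ij: "(i, j) \<in> E" using nonisol[OF iV] by blast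
  have ne: "j \<noteq> i" using ij irrE[of i] by auto
  have mj: "mv E i H j = H j" using ne by simp
  show ?thesis
  proof (cases "up E H i")
    case True
    then have Hj: "H j = H i + 1" using ij unfolding up_def by auto
    have mi: "mv E i H i = H i + 2" using True by (simp add: mv_self)
    have dn2: "dn E (mv E i H) i"
      unfolding dn_def
    proof (intro allI impI)
      fix k assume k: "(i, k) \<in> E"
      then have "k \<noteq> i" using irrE[of i] by auto
      then show "mv E i H k = mv E i H i - 1" using mi True k unfolding up_def by simp
    qed
    have nup: "\<not> up E (mv E i H) i"
      using ij Hj mj mi unfolding up_def by auto
    have "mv E i (mv E i H) = H"
    proof
      fix k show "mv E i (mv E i H) k = H k"
        by (cases "k = i") (simp_all add: mv_self nup mi True)
    qed
    then show ?thesis using dn2 iV unfolding mvable_def by auto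
  next
    case False
    then have dn: "dn E H i" using assms(2) unfolding mvable_def by auto
    have mi: "mv E i H i = H i - 2" using False by (simp add: mv_self)
    have up2: "up E (mv E i H) i"
      unfolding up_def
    proof (intro allI impI)
      fix k assume k: "(i, k) \<in> E"
      then have "k \<noteq> i" using irrE[of i] by auto
      then show "mv E i H k = mv E i H i + 1" using mi dn k unfolding dn_def by simp
    qed
    have "mv E i (mv E i H) = H"
    proof
      fix k show "mv E i (mv E i H) k = H k"
        by (cases "k = i") (simp_all add: mv_self up2 mi False)
    qed
    then show ?thesis using up2 iV unfolding mvable_def by auto
  qed
qed

lemma mv_comm:
  assumes "mvable V E H i" "mvable V E H j" "i \<noteq> j" "(i, j) \<notin> E"
  shows "mvable V E (mv E i H) j \<and> mv E j (mv E i H) = mv E i (mv E j H)"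
proof -
  have ji: "(j, i) \<notin> E" using assms(4) symE[of j i] by blast
  have "up E (mv E i H) j = up E H j" "dn E (mv E i H) j = dn E H j"
    using assms(3) ji unfolding up_def dn_def mv_def by auto
  moreover have "up E (mv E j H) i = up E H i"
    using assms(3) assms(4) unfolding up_def dn_def mv_def by auto
  ultimately show ?thesis using assms(2,3) unfolding mvable_def mv_def
    by (auto simp: fun_upd_twist)
qed

end

context tc
begin

lemma nbr_other: "i \<noteq> j \<Longrightarrow> (j, i) \<notin> E \<Longrightarrow> (\<forall>k. (j, k) \<in> E \<longrightarrow> mv E i H k = H k) \<and> mv E i H j = H j"
  by (metis mv_other)

lemma up_other: "i \<noteq> j \<Longrightarrow> (j, i) \<notin> E \<Longrightarrow> up E (mv E i H) j = up E H j"
  using nbr_other[of i j H] unfolding up_def by simp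

lemma dn_other: "i \<noteq> j \<Longrightarrow> (j, i) \<notin> E \<Longrightarrow> dn E (mv E i H) j = dn E H j"
  using nbr_other[of i j H] unfolding dn_def by simp

lemma wequiv_cons:
  assumes "gd E H" "path V E H (i # p)" "wequiv V E D (ori E (mv E i H)) (wd p) (wd q)"
  shows "wequiv V E D (ori E H) (wd (i # p)) (wd (i # q))"
proof -
  have m: "mvable V E H i" using assms(2) by simp
  have v: "valid V D (ori E H) ([(Sg i, False)] @ wd p @ [])"
    using path_valid[OF assms(1), of D "i # p"] assms(2) by simp
  have w: "walk (ori E H) [(Sg i, False)] = ori E (mv E i H)"
    using ori_mv[OF assms(1) m] by simp
  show ?thesis using wequiv_ctx[of V E D "ori E H" "[(Sg i, False)]" "wd p" "wd q" "[]"] assms(3) v w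
    by simp
qed

lemma wequiv_R1:
  assumes "gd E H" "path V E H p"
  shows "wequiv V E D (ori E H) (wd (i # i # p)) (wd p) \<or> \<not> mvable V E H i"
proof (cases "mvable V E H i")
  case True
  have g2: "gd E (mv E i H)" using gd_mv[OF assms(1) True] .
  have mb: "mvable V E (mv E i H) i" "mv E i (mv E i H) = H" using mv_back[OF assms(1) True] by auto
  have pp: "path V E H (i # i # p)" using True mb assms(2) by simp
  have v: "valid V D (ori E H) ([] @ [(Sg i, False), (Sg i, False)] @ wd p)"
    using path_valid[OF assms(1), of D "i # i # p"] pp by simp
  have r: "rel V E D (walk (ori E H) []) [(Sg i, False), (Sg i, False)] []"
    using v by (intro rel_R1) simp
  show ?thesis using rel_wequiv[OF r v] by simp
qed simp

lemma wequiv_R2: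
  assumes "gd E H" "path V E H (i # j # p)" "path V E H (j # i # p)" "(i, j) \<notin> E"
  shows "wequiv V E D (ori E H) (wd (i # j # p)) (wd (j # i # p))"
proof -
  have v: "valid V D (ori E H) ([] @ [(Sg i, False), (Sg j, False)] @ wd p)"
    using path_valid[OF assms(1), of D "i # j # p"] assms(2) by simp
  have v2: "valid V D (ori E H) ([] @ [(Sg j, False), (Sg i, False)] @ wd p)"
    using path_valid[OF assms(1), of D "j # i # p"] assms(3) by simp
  have ji: "(j, i) \<notin> E" using assms(4) symE[of j i] by blast
  have r: "rel V E D (walk (ori E H) []) [(Sg i, False), (Sg j, False)] [(Sg j, False), (Sg i, False)]"
    using v v2 by (intro rel_R2[OF ji]) simp_all
  show ?thesis using rel_wequiv[OF r v] by simp
qed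

end

locale tct = tc +
  fixes T :: "'v \<Rightarrow> int"
  assumes gdT: "gd E T"
begin

definition Phi :: "('v \<Rightarrow> int) \<Rightarrow> int" where
  "Phi H = (\<Sum>v\<in>V. \<bar>H v - T v\<bar>)"

definition good :: "('v \<Rightarrow> int) \<Rightarrow> bool" where
  "good H \<longleftrightarrow> gd E H \<and> (\<forall>v. even (H v - T v)) \<and> (\<forall>v. v \<notin> V \<longrightarrow> H v = T v)"

definition dec :: "('v \<Rightarrow> int) \<Rightarrow> 'v \<Rightarrow> bool" where
  "dec H i \<longleftrightarrow> (up E H i \<and> H i < T i) \<or> (\<not> up E H i \<and> T i < H i)"

lemma good_mv:
  assumes "good H" "mvable V E H i"
  shows "good (mv E i H)"
proof -
  have iV: "i \<in> V" using assms(2) unfolding mvable_def by simp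
  have "even (mv E i H v - T v)" for v
  proof (cases "v = i")
    case True
    have "even (H i - T i)" using assms(1) unfolding good_def by simp
    then show ?thesis using True by (auto simp: mv_self)
  next
    case False then show ?thesis using assms(1) unfolding good_def by simp
  qed
  moreover have "v \<notin> V \<Longrightarrow> mv E i H v = T v" for v
    using assms(1) iV unfolding good_def by (cases "v = i") auto
  ultimately show ?thesis using gd_mv[OF _ assms(2)] assms(1) unfolding good_def by auto
qed

lemma good_lift:
  assumes "good H" "path V E H p"
  shows "good (lift E H p)"
  using assms by (induction p arbitrary: H) (auto simp: good_mv)

lemma Phi_mv:
  assumes "good H" "mvable V E H i"
  shows "Phi (mv E i H) = (if dec H i then Phi H - 2 else Phi H + 2)"
proof -
  have iV: "i \<in> V" using assms(2) unfolding mvable_def by simp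
  have ev: "even (H i - T i)" using assms(1) unfolding good_def by simp
  have rest: "(\<Sum>v\<in>V - {i}. \<bar>mv E i H v - T v\<bar>) = (\<Sum>v\<in>V - {i}. \<bar>H v - T v\<bar>)"
    by (rule sum.cong) auto
  have s1: "Phi (mv E i H) = \<bar>mv E i H i - T i\<bar> + (\<Sum>v\<in>V - {i}. \<bar>mv E i H v - T v\<bar>)"
    unfolding Phi_def using sum.remove[OF finV iV] by blast
  have s2: "Phi H = \<bar>H i - T i\<bar> + (\<Sum>v\<in>V - {i}. \<bar>H v - T v\<bar>)"
    unfolding Phi_def using sum.remove[OF finV iV] by blast
  have ne1: "H i - T i \<noteq> -1" using ev by (metis even_minus odd_one)
  have ne2: "H i - T i \<noteq> 1" using ev by (metis odd_one)
  have "\<bar>mv E i H i - T i\<bar> = (if dec H i then \<bar>H i - T i\<bar> - 2 else \<bar>H i - T i\<bar> + 2)"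
    using ne1 ne2 unfolding mv_self dec_def by auto
  then show ?thesis using s1 s2 rest by simp
qed

lemma Phi_nonneg: "0 \<le> Phi H"
  unfolding Phi_def by (rule sum_nonneg) simp

lemma Phi_zero:
  assumes "good H" "Phi H = 0"
  shows "H = T"
proof
  fix v
  show "H v = T v"
  proof (cases "v \<in> V")
    case True
    have "\<forall>v\<in>V. \<bar>H v - T v\<bar> = 0"
      using assms(2) sum_nonneg_eq_0_iff[OF finV, of "\<lambda>v. \<bar>H v - T v\<bar>"] unfolding Phi_def by simp
    then show ?thesis using True by simp
  next
    case False then show ?thesis using assms(1) unfolding good_def by simp
  qed
qed

lemma Phi_T: "Phi T = 0"
  unfolding Phi_def by simp

lemma Phi_le:
  assumes "good H" "path V E H p" "lift E H p = T"
  shows "Phi H \<le> 2 * int (length p)"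
  using assms
proof (induction p arbitrary: H)
  case Nil then show ?case using Phi_T by simp
next
  case (Cons i p)
  have m: "mvable V E H i" using Cons.prems by simp
  have "Phi (mv E i H) \<le> 2 * int (length p)"
    using Cons.IH[OF good_mv[OF Cons.prems(1) m]] Cons.prems by simp
  then show ?case using Phi_mv[OF Cons.prems(1) m] by (simp split: if_splits)
qed

lemma exists_dec:
  assumes "good H" "H \<noteq> T"
  shows "\<exists>i. mvable V E H i \<and> dec H i"
proof -
  have gH: "gd E H" and ev: "\<And>v. even (H v - T v)" and out: "\<And>v. v \<notin> V \<Longrightarrow> H v = T v"
    using assms(1) unfolding good_def by auto
  obtain v0 where "H v0 \<noteq> T v0" using assms(2) by blast
  then have v0V: "v0 \<in> V" using out by blast
  have ev2: "\<And>v. H v < T v \<Longrightarrow> H v + 2 \<le> T v"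
  proof -
    fix v assume "H v < T v"
    moreover have "H v - T v \<noteq> -1" using ev[of v] by (metis even_minus odd_one)
    ultimately show "H v + 2 \<le> T v" by linarith
  qed
  have ev3: "\<And>v. T v < H v \<Longrightarrow> T v + 2 \<le> H v"
  proof -
    fix v assume "T v < H v"
    moreover have "H v - T v \<noteq> 1" using ev[of v] by (metis odd_one)
    ultimately show "T v + 2 \<le> H v" by linarith
  qed
  have gT: "\<And>a b. (a, b) \<in> E \<Longrightarrow> T a = T b + 1 \<or> T b = T a + 1" using gdT unfolding gd_def by blast
  have gH': "\<And>a b. (a, b) \<in> E \<Longrightarrow> H a = H b + 1 \<or> H b = H a + 1" using gH unfolding gd_def by blast
  show ?thesis
  proof (cases "\<exists>v\<in>V. H v < T v")
    case True
    let ?S = "{v \<in> V. H v < T v}"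
    have fS: "finite ?S" using finV by simp
    have neS: "?S \<noteq> {}" using True by blast
    have "Min (H ` ?S) \<in> H ` ?S" using fS neS by simp
    then obtain m where mS: "m \<in> ?S" and mq: "H m = Min (H ` ?S)" by auto
    have mmin: "\<And>u. u \<in> ?S \<Longrightarrow> H m \<le> H u" unfolding mq using fS by simp
    have "up E H m" unfolding up_def
    proof (intro allI impI)
      fix u assume mu: "(m, u) \<in> E"
      show "H u = H m + 1"
      proof (rule ccontr)
        assume "H u \<noteq> H m + 1"
        then have hu: "H u = H m - 1" using gH'[OF mu] by auto
        have "T u \<ge> T m - 1" using gT[OF mu] by auto
        moreover have "T m \<ge> H m + 2" using ev2 mS by auto
        ultimately have "H u < T u" using hu by linarith
        moreover have "u \<in> V" using mu EV by auto
        ultimately have "H m \<le> H u" using mmin by auto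
        then show False using hu by simp
      qed
    qed
    then show ?thesis using mS unfolding mvable_def dec_def by auto
  next
    case False
    then have True': "\<exists>v\<in>V. T v < H v" using v0V \<open>H v0 \<noteq> T v0\<close> by (metis linorder_neqE_linordered_idom)
    let ?S = "{v \<in> V. T v < H v}"
    have fS: "finite ?S" using finV by simp
    have neS: "?S \<noteq> {}" using True' by blast
    have "Max (H ` ?S) \<in> H ` ?S" using fS neS by simp
    then obtain m where mS: "m \<in> ?S" and mq: "H m = Max (H ` ?S)" by auto
    have mmax: "\<And>u. u \<in> ?S \<Longrightarrow> H u \<le> H m" unfolding mq using fS by simp
    have dm: "dn E H m" unfolding dn_def
    proof (intro allI impI)
      fix u assume mu: "(m, u) \<in> E"
      show "H u = H m - 1"
      proof (rule ccontr)
        assume "H u \<noteq> H m - 1"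
        then have hu: "H u = H m + 1" using gH'[OF mu] by auto
        have "T u \<le> T m + 1" using gT[OF mu] by auto
        moreover have "T m + 2 \<le> H m" using ev3 mS by auto
        ultimately have "T u < H u" using hu by linarith
        moreover have "u \<in> V" using mu EV by auto
        ultimately have "H u \<le> H m" using mmax by auto
        then show False using hu by simp
      qed
    qed
    have "\<not> up E H m"
    proof
      assume "up E H m"
      obtain u where "(m, u) \<in> E" using nonisol mS by blast
      then show False using dm \<open>up E H m\<close> unfolding up_def dn_def by force
    qed
    then show ?thesis using mS dm unfolding mvable_def dec_def by auto
  qed
qed

end

context tct
begin

definition geo :: "('v \<Rightarrow> int) \<Rightarrow> 'v list \<Rightarrow> bool" where
  "geo H p \<longleftrightarrow> path V E H p \<and> lift E H p = T \<and> 2 * int (length p) = Phi H"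

lemma geo_cons:
  assumes "good H" "mvable V E H i" "dec H i" "geo (mv E i H) p"
  shows "geo H (i # p)"
  using assms Phi_mv[OF assms(1,2)] unfolding geo_def by auto

lemma geo_tl:
  assumes "good H" "geo H (i # p)"
  shows "mvable V E H i \<and> dec H i \<and> geo (mv E i H) p"
proof -
  have m: "mvable V E H i" and pp: "path V E (mv E i H) p" and l: "lift E (mv E i H) p = T"
    and len: "2 * int (length p) + 2 = Phi H"
    using assms(2) unfolding geo_def by auto
  have g1: "good (mv E i H)" using good_mv[OF assms(1) m] .
  have le: "Phi (mv E i H) \<le> 2 * int (length p)" using Phi_le[OF g1 pp l] .
  have d: "dec H i"
  proof (rule ccontr)
    assume "\<not> dec H i"
    then have "Phi (mv E i H) = Phi H + 2" using Phi_mv[OF assms(1) m] by simp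
    then show False using le len by simp
  qed
  then have "Phi (mv E i H) = Phi H - 2" using Phi_mv[OF assms(1) m] by simp
  then show ?thesis using m d pp l len unfolding geo_def by simp
qed

lemma geo_exists:
  assumes "good H"
  shows "\<exists>p. geo H p"
  using assms
proof (induction "nat (Phi H)" arbitrary: H rule: less_induct)
  case less
  show ?case
  proof (cases "H = T")
    case True
    then have "geo H []" unfolding geo_def using Phi_T by simp
    then show ?thesis by blast
  next
    case False
    obtain i where m: "mvable V E H i" and d: "dec H i" using exists_dec[OF less.prems False] by blast
    have g1: "good (mv E i H)" using good_mv[OF less.prems m] .
    have ph: "Phi (mv E i H) = Phi H - 2" using Phi_mv[OF less.prems m] d by simp
    have "0 \<le> Phi (mv E i H)" by (rule Phi_nonneg)
    then have "nat (Phi (mv E i H)) < nat (Phi H)" using ph by simp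
    then obtain p where "geo (mv E i H) p" using less.hyps g1 by blast
    then show ?thesis using geo_cons[OF less.prems m d] by blast
  qed
qed

lemma adj_dec:
  assumes "good H" "mvable V E H i" "mvable V E H j" "dec H i" "dec H j" "(i, j) \<in> E"
  shows False
proof -
  have gH: "gd E H" and ev: "\<And>v. even (H v - T v)" using assms(1) unfolding good_def by auto
  have ev2: "\<And>v. H v < T v \<Longrightarrow> H v + 2 \<le> T v"
  proof -
    fix v assume "H v < T v"
    moreover have "H v - T v \<noteq> -1" using ev[of v] by (metis even_minus odd_one)
    ultimately show "H v + 2 \<le> T v" by linarith
  qed
  have ev3: "\<And>v. T v < H v \<Longrightarrow> T v + 2 \<le> H v"
  proof -
    fix v assume "T v < H v"
    moreover have "H v - T v \<noteq> 1" using ev[of v] by (metis odd_one)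
    ultimately show "T v + 2 \<le> H v" by linarith
  qed
  have ji: "(j, i) \<in> E" using symE[OF assms(6)] .
  have tij: "T i = T j + 1 \<or> T j = T i + 1" using gdT assms(6) unfolding gd_def by blast
  show False
  proof (cases "up E H i")
    case True
    then have hj: "H j = H i + 1" using assms(6) unfolding up_def by auto
    have nuj: "\<not> up E H j" using ji hj unfolding up_def by force
    then have "T j < H j" using assms(5) unfolding dec_def by auto
    moreover have "H i < T i" using True assms(4) unfolding dec_def by auto
    ultimately show False using ev2[of i] ev3[of j] hj tij by linarith
  next
    case False
    then have "dn E H i" using assms(2) unfolding mvable_def by auto
    then have hj: "H j = H i - 1" using assms(6) unfolding dn_def by auto
    have ndj: "\<not> dn E H j" using ji hj unfolding dn_def by force
    then have uj: "up E H j" using assms(3) unfolding mvable_def by auto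
    then have "H j < T j" using assms(5) unfolding dec_def by auto
    moreover have "T i < H i" using False assms(4) unfolding dec_def by auto
    ultimately show False using ev2[of j] ev3[of i] hj tij by linarith
  qed
qed

lemma dec_other: "i \<noteq> j \<Longrightarrow> (j, i) \<notin> E \<Longrightarrow> dec (mv E i H) j = dec H j"
  unfolding dec_def using up_other[of i j H] mv_other[of j i H] by simp

lemma mvable_other: "i \<noteq> j \<Longrightarrow> (j, i) \<notin> E \<Longrightarrow> mvable V E (mv E i H) j = mvable V E H j"
  unfolding mvable_def using up_other[of i j H] dn_other[of i j H] by simp

lemma geo_unique:
  assumes "good H" "geo H p" "geo H q"
  shows "wequiv V E D (ori E H) (wd p) (wd q)"
  using assms
proof (induction "nat (Phi H)" arbitrary: H p q rule: less_induct)
  case less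
  have gdH: "gd E H" using less.prems(1) unfolding good_def by simp
  show ?case
  proof (cases p)
    case Nil
    then have "Phi H = 0" using less.prems(2) Phi_T unfolding geo_def by simp
    then have "q = []" using less.prems(3) unfolding geo_def by simp
    then show ?thesis using Nil by simp
  next
    case (Cons x p')
    then have "Phi H \<noteq> 0" using less.prems(2) unfolding geo_def by simp
    then obtain y q' where q: "q = y # q'" using less.prems(3) unfolding geo_def by (cases q) auto
    have gx: "mvable V E H x" "dec H x" "geo (mv E x H) p'" using geo_tl[OF less.prems(1)] less.prems(2) Cons by auto
    have gy: "mvable V E H y" "dec H y" "geo (mv E y H) q'" using geo_tl[OF less.prems(1)] less.prems(3) q by auto
    have px: "nat (Phi (mv E x H)) < nat (Phi H)"
      using Phi_mv[OF less.prems(1) gx(1)] gx(2) Phi_nonneg[of "mv E x H"] by simp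
    have py: "nat (Phi (mv E y H)) < nat (Phi H)"
      using Phi_mv[OF less.prems(1) gy(1)] gy(2) Phi_nonneg[of "mv E y H"] by simp
    have g1: "good (mv E x H)" using good_mv[OF less.prems(1) gx(1)] .
    have g2: "good (mv E y H)" using good_mv[OF less.prems(1) gy(1)] .
    have pathp: "path V E H (x # p')" using less.prems(2) Cons unfolding geo_def by simp
    have pathq: "path V E H (y # q')" using less.prems(3) q unfolding geo_def by simp
    show ?thesis
    proof (cases "x = y")
      case True
      have "wequiv V E D (ori E (mv E x H)) (wd p') (wd q')"
        using less.hyps[OF px g1 gx(3)] gy(3) True by simp
      then show ?thesis using wequiv_cons[OF gdH pathp] Cons q True by simp
    next
      case False
      have xy: "(x, y) \<notin> E" using adj_dec[OF less.prems(1) gx(1) gy(1) gx(2) gy(2)] by blast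
      have yx: "(y, x) \<notin> E" using xy symE[of y x] by blast
      have c: "mvable V E (mv E x H) y \<and> mv E y (mv E x H) = mv E x (mv E y H)"
        using mv_comm[OF gx(1) gy(1) False xy] .
      have c2: "mvable V E (mv E y H) x"
        using mvable_other[of y x H] False xy gx(1) by simp
      have d1: "dec (mv E x H) y" using dec_other[of x y H] False yx gy(2) by simp
      have d2: "dec (mv E y H) x" using dec_other[of y x H] False xy gx(2) by simp
      have g12: "good (mv E y (mv E x H))" using good_mv[OF g1, of y] c by blast
      obtain g where gg: "geo (mv E y (mv E x H)) g" using geo_exists[OF g12] by blast
      have geo1: "geo (mv E x H) (y # g)" using geo_cons[OF g1 _ d1 gg] c by simp
      have geo2: "geo (mv E y H) (x # g)" using geo_cons[OF g2 c2 d2] gg c by simp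
      have e1: "wequiv V E D (ori E (mv E x H)) (wd p') (wd (y # g))"
        using less.hyps[OF px g1 gx(3) geo1] .
      have e2: "wequiv V E D (ori E (mv E y H)) (wd q') (wd (x # g))"
        using less.hyps[OF py g2 gy(3) geo2] .
      have f1: "wequiv V E D (ori E H) (wd (x # p')) (wd (x # y # g))"
        using wequiv_cons[OF gdH pathp e1] .
      have f2: "wequiv V E D (ori E H) (wd (y # q')) (wd (y # x # g))"
        using wequiv_cons[OF gdH pathq e2] .
      have pxy: "path V E H (x # y # g)" using geo1 gx(1) unfolding geo_def by simp
      have pyx: "path V E H (y # x # g)" using geo2 gy(1) unfolding geo_def by simp
      have f3: "wequiv V E D (ori E H) (wd (x # y # g)) (wd (y # x # g))"
        using wequiv_R2[OF gdH pxy pyx xy] .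
      show ?thesis using wequiv_trans[OF wequiv_trans[OF f1 f3] wequiv_sym[OF f2]] Cons q by simp
    qed
  qed
qed

lemma core_geo:
  assumes "good H" "path V E H p" "lift E H p = T" "geo H g"
  shows "wequiv V E D (ori E H) (wd p) (wd g)"
  using assms
proof (induction p arbitrary: H g)
  case Nil
  then have "Phi H = 0" using Phi_T by simp
  then have "g = []" using Nil.prems(4) unfolding geo_def by simp
  then show ?case by simp
next
  case (Cons x p)
  have gdH: "gd E H" using Cons.prems(1) unfolding good_def by simp
  have m: "mvable V E H x" and pp: "path V E (mv E x H) p" and l: "lift E (mv E x H) p = T"
    using Cons.prems by auto
  have g1: "good (mv E x H)" using good_mv[OF Cons.prems(1) m] .
  show ?case
  proof (cases "dec H x")
    case True
    obtain g1' where gg: "geo (mv E x H) g1'" using geo_exists[OF g1] by blast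
    have e1: "wequiv V E D (ori E (mv E x H)) (wd p) (wd g1')" using Cons.IH[OF g1 pp l gg] .
    have f1: "wequiv V E D (ori E H) (wd (x # p)) (wd (x # g1'))"
      using wequiv_cons[OF gdH _ e1] Cons.prems(2) by simp
    have "geo H (x # g1')" using geo_cons[OF Cons.prems(1) m True gg] .
    then have f2: "wequiv V E D (ori E H) (wd (x # g1')) (wd g)"
      using geo_unique[OF Cons.prems(1) _ Cons.prems(4)] by blast
    show ?thesis using wequiv_trans[OF f1 f2] .
  next
    case False
    have mb: "mvable V E (mv E x H) x" "mv E x (mv E x H) = H" using mv_back[OF gdH m] by auto
    have "Phi (mv E x H) = Phi H + 2" using Phi_mv[OF Cons.prems(1) m] False by simp
    moreover have "Phi (mv E x (mv E x H)) = Phi H" using mb by simp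
    ultimately have d1: "dec (mv E x H) x" using Phi_mv[OF g1 mb(1)] by (simp split: if_splits)
    have gg: "geo (mv E x H) (x # g)" using geo_cons[OF g1 mb(1) d1] mb(2) Cons.prems(4) by simp
    have e1: "wequiv V E D (ori E (mv E x H)) (wd p) (wd (x # g))" using Cons.IH[OF g1 pp l gg] .
    have f1: "wequiv V E D (ori E H) (wd (x # p)) (wd (x # x # g))"
      using wequiv_cons[OF gdH _ e1] Cons.prems(2) by simp
    have pg: "path V E H g" using Cons.prems(4) unfolding geo_def by simp
    have f2: "wequiv V E D (ori E H) (wd (x # x # g)) (wd g)"
      using wequiv_R1[OF gdH pg, of D x] m by simp
    show ?thesis using wequiv_trans[OF f1 f2] .
  qed
qed

lemma core:
  assumes "good H" "path V E H p" "lift E H p = T" "path V E H q" "lift E H q = T"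
  shows "wequiv V E D (ori E H) (wd p) (wd q)"
proof -
  obtain g where g: "geo H g" using geo_exists[OF assms(1)] by blast
  show ?thesis using wequiv_trans[OF core_geo[OF assms(1-3) g] wequiv_sym[OF core_geo[OF assms(1) assms(4,5) g]]] .
qed

end

lemma dp_parity: "even m = even n \<Longrightarrow> dp m = dp n"
  unfolding dp_def by simp

lemma finish:
  assumes "valid V D Q w" "valid V D Q cw"
    and "wequiv V E D Q (wd (sgs w)) (wd (sgs cw))" and "even (nd w) = even (nd cw)"
  shows "wequiv V E D Q w cw"
proof -
  have n1: "wequiv V E D Q w (wd (sgs w) @ dp (nd w))" using normalize[OF assms(1)] .
  have n2: "wequiv V E D Q cw (wd (sgs cw) @ dp (nd cw))" using normalize[OF assms(2)] .
  have v1: "valid V D Q ([] @ wd (sgs w) @ dp (nd w))" using wequiv_walk[OF n1 assms(1)] by simp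
  have "wequiv V E D (walk Q []) (wd (sgs w)) (wd (sgs cw))" using assms(3) by simp
  from wequiv_ctx[OF this v1] have m0: "wequiv V E D Q (wd (sgs w) @ dp (nd w)) (wd (sgs cw) @ dp (nd w))"
    by simp
  have m: "wequiv V E D Q (wd (sgs w) @ dp (nd w)) (wd (sgs cw) @ dp (nd cw))"
    using m0 dp_parity[OF assms(4)] by metis
  show ?thesis using wequiv_trans[OF wequiv_trans[OF n1 m] wequiv_sym[OF n2]] .
qed

lemma loops_concat:
  assumes "\<forall>g\<in>set ws. valid V D Q g \<and> walk Q g = Q"
  shows "valid V D Q (concat ws) \<and> walk Q (concat ws) = Q"
  using assms by (induction ws) auto

lemma nd_False: "valid V False Q w \<Longrightarrow> nd w = 0"
proof (induction w arbitrary: Q)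
  case (Cons x w)
  obtain g b where x: "x = (g, b)" by force
  show ?case using Cons x by (cases g) auto
qed simp

lemma sgs_concat_rep: "sgs (concat (replicate k xs)) = concat (replicate k (sgs xs))"
  by (induction k) auto

lemma nd_concat_rep: "nd (concat (replicate k xs)) = k * nd xs"
  by (induction k) auto

context tc
begin

lemma lift_props:
  assumes "gd E H" "path V E H p"
  shows "gd E (lift E H p) \<and> (\<forall>v. even (lift E H p v - H v)) \<and> (\<forall>v. v \<notin> V \<longrightarrow> lift E H p v = H v)"
  using assms
proof (induction p arbitrary: H)
  case (Cons i p)
  have m: "mvable V E H i" and pp: "path V E (mv E i H) p" using Cons.prems by auto
  have iV: "i \<in> V" using m unfolding mvable_def by simp
  have IH: "gd E (lift E (mv E i H) p) \<and> (\<forall>v. even (lift E (mv E i H) p v - mv E i H v))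
     \<and> (\<forall>v. v \<notin> V \<longrightarrow> lift E (mv E i H) p v = mv E i H v)"
    using Cons.IH[OF gd_mv[OF Cons.prems(1) m] pp] .
  have e: "even (mv E i H v - H v)" for v
    by (cases "v = i") (auto simp: mv_self)
  have B: "\<forall>v. even (lift E (mv E i H) p v - H v)"
  proof
    fix v
    have "lift E (mv E i H) p v - H v = (lift E (mv E i H) p v - mv E i H v) + (mv E i H v - H v)" by simp
    then show "even (lift E (mv E i H) p v - H v)" using IH e[of v] by (metis even_add)
  qed
  have C: "\<forall>v. v \<notin> V \<longrightarrow> lift E (mv E i H) p v = H v"
    using IH iV by (metis mv_other)
  have A: "gd E (lift E (mv E i H) p)" using IH by blast
  show ?case unfolding lift.simps using A B C by blast
qed simp

lemma same_lift:
  assumes "gd E H" "path V E H p" "path V E H q" "lift E H p = lift E H q"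
  shows "wequiv V E D (ori E H) (wd p) (wd q)"
proof -
  have lp: "gd E (lift E H p) \<and> (\<forall>v. even (lift E H p v - H v)) \<and> (\<forall>v. v \<notin> V \<longrightarrow> lift E H p v = H v)"
    using lift_props[OF assms(1,2)] .
  interpret t: tct V E "lift E H p"
    by (rule tct.intro[OF tc_axioms]) (simp add: tct_axioms_def lp)
  have "even (H v - lift E H p v)" for v
  proof -
    have "H v - lift E H p v = - (lift E H p v - H v)" by simp
    then show ?thesis using lp by (metis even_minus)
  qed
  then have g: "t.good H" unfolding t.good_def using assms(1) lp by auto
  show ?thesis using t.core[OF g assms(2) refl assms(3)] assms(4) by simp
qed

lemma const_diff:
  assumes conn: "\<forall>u\<in>V. \<forall>v\<in>V. (u, v) \<in> E\<^sup>*"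
    and "gd E H1" "gd E H2" "ori E H1 = ori E H2" "u \<in> V" "v \<in> V"
  shows "H1 u - H2 u = H1 v - H2 v"
proof -
  have edge: "H1 a - H2 a = H1 b - H2 b" if ab: "(a, b) \<in> E" for a b
  proof -
    have "(a, b) \<in> ori E H1 \<longleftrightarrow> (a, b) \<in> ori E H2" using assms(4) by simp
    then have eq: "H1 b = H1 a + 1 \<longleftrightarrow> H2 b = H2 a + 1" using ab by (simp only: mem_ori) blast
    have d1: "H1 a = H1 b + 1 \<or> H1 b = H1 a + 1" using assms(2) ab unfolding gd_def by blast
    have d2: "H2 a = H2 b + 1 \<or> H2 b = H2 a + 1" using assms(3) ab unfolding gd_def by blast
    show ?thesis
    proof (cases "H1 b = H1 a + 1")
      case True
      then have "H2 b = H2 a + 1" using eq by blast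
      then show ?thesis using True by simp
    next
      case False
      then have "H2 b \<noteq> H2 a + 1" using eq by blast
      then show ?thesis using False d1 d2 by simp
    qed
  qed
  have "(u, v) \<in> E\<^sup>*" using conn assms(5,6) by blast
  then show ?thesis
  proof (induction rule: rtrancl_induct)
    case base then show ?case by simp
  next
    case (step y z) then show ?case using edge[OF step(2)] by simp
  qed
qed

lemma ori_neg: "ori E (\<lambda>v. - H v) = (ori E H)\<inverse>"
proof (rule set_eqI)
  fix x :: "'v \<times> 'v"
  obtain a b where x: "x = (a, b)" by force
  have "(a, b) \<in> E \<longleftrightarrow> (b, a) \<in> E" using symE by blast
  then show "x \<in> ori E (\<lambda>v. - H v) \<longleftrightarrow> x \<in> (ori E H)\<inverse>" using x by auto
qed

end

context tc
begin

lemma sweep: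
  assumes "distinct xs" "set xs \<subseteq> V"
    and "\<forall>i\<in>set xs. \<forall>j. (i, j) \<in> E \<longrightarrow> j \<notin> set xs \<and> G j = b"
    and "\<forall>i\<in>set xs. G i = a" and "b = a + 1 \<or> b = a - 1"
  shows "path V E G xs \<and> lift E G xs = (\<lambda>v. if v \<in> set xs then 2 * b - a else G v)"
  using assms(1-4)
proof (induction xs arbitrary: G)
  case Nil then show ?case by simp
next
  case (Cons i xs)
  have iV: "i \<in> V" using Cons.prems(2) by simp
  obtain j0 where ij0: "(i, j0) \<in> E" using nonisol[OF iV] by blast
  have nb: "\<And>j. (i, j) \<in> E \<Longrightarrow> G j = b" using Cons.prems(3) by simp
  have Gi: "G i = a" using Cons.prems(4) by simp
  have mvi: "mvable V E G i \<and> mv E i G = G(i := 2 * b - a)"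
  proof (cases "b = a + 1")
    case True
    then have u: "up E G i" unfolding up_def using nb Gi by simp
    then show ?thesis using iV True Gi unfolding mvable_def mv_def by simp
  next
    case False
    then have b: "b = a - 1" using assms(5) by simp
    have nu: "\<not> up E G i" unfolding up_def using nb[OF ij0] Gi b ij0 by force
    have d: "dn E G i" unfolding dn_def using nb Gi b by simp
    show ?thesis using iV nu d b Gi unfolding mvable_def mv_def by simp
  qed
  let ?G' = "G(i := 2 * b - a)"
  have p3: "\<forall>i'\<in>set xs. \<forall>j. (i', j) \<in> E \<longrightarrow> j \<notin> set xs \<and> ?G' j = b"
  proof (intro ballI allI impI)
    fix i' j assume i': "i' \<in> set xs" and e: "(i', j) \<in> E"
    have "j \<notin> set (i # xs) \<and> G j = b" using Cons.prems(3) i' e by simp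
    then show "j \<notin> set xs \<and> ?G' j = b" by auto
  qed
  have p4: "\<forall>i'\<in>set xs. ?G' i' = a" using Cons.prems(1,4) by auto
  have IH: "path V E ?G' xs \<and> lift E ?G' xs = (\<lambda>v. if v \<in> set xs then 2 * b - a else ?G' v)"
  proof (rule Cons.IH)
    show "distinct xs" using Cons.prems(1) by simp
    show "set xs \<subseteq> V" using Cons.prems(2) by simp
  qed (use p3 p4 in blast)+
  have mq: "mv E i G = ?G'" using mvi by simp
  have pth: "path V E G (i # xs)" using IH mvi mq by simp
  have "lift E G (i # xs) = lift E ?G' xs" using mq by simp
  also have "\<dots> = (\<lambda>v. if v \<in> set (i # xs) then 2 * b - a else G v)" using IH by (auto simp: fun_eq_iff)
  finally show ?case using pth by simp
qed

end

locale bip = tc +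
  fixes P N :: "'v set" and ps ns :: "'v list"
  assumes VPN: "V = P \<union> N" and disj: "P \<inter> N = {}"
    and noP: "\<forall>a\<in>P. \<forall>b\<in>P. (a, b) \<notin> E" and noN: "\<forall>a\<in>N. \<forall>b\<in>N. (a, b) \<notin> E"
    and ps: "set ps = P" "distinct ps" and ns: "set ns = N" "distinct ns"
    and conn: "\<forall>u\<in>V. \<forall>v\<in>V. (u, v) \<in> E\<^sup>*" and Vne: "V \<noteq> {}"
begin

definition St :: "int \<Rightarrow> int \<Rightarrow> 'v \<Rightarrow> int" where
  "St a b = (\<lambda>v. if v \<in> P then a else if v \<in> N then b else 0)"

definition G0 :: "('v \<times> 'v) set" where
  "G0 = {(a, b). (a, b) \<in> E \<and> a \<in> P}"

lemma edge_P: "(x, y) \<in> E \<Longrightarrow> x \<in> P \<Longrightarrow> y \<in> N \<and> y \<notin> P \<and> x \<notin> N"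
  using EV VPN noP disj by blast

lemma edge_N: "(x, y) \<in> E \<Longrightarrow> x \<in> N \<Longrightarrow> y \<in> P \<and> y \<notin> N \<and> x \<notin> P"
  using EV VPN noN disj by blast

lemma edge_V: "(x, y) \<in> E \<Longrightarrow> x \<in> P \<or> x \<in> N"
  using EV VPN by blast

lemma St_P: "x \<in> P \<Longrightarrow> St a b x = a" and St_N: "x \<in> N \<Longrightarrow> St a b x = b"
  unfolding St_def using disj by auto

lemma gd_St: "b = a + 1 \<or> b = a - 1 \<Longrightarrow> gd E (St a b)"
  unfolding gd_def
proof (intro allI impI)
  fix x y assume b: "b = a + 1 \<or> b = a - 1" and e: "(x, y) \<in> E"
  show "St a b x = St a b y + 1 \<or> St a b y = St a b x + 1"
  proof (cases "x \<in> P")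
    case True
    then show ?thesis using edge_P[OF e True] St_P[OF True] St_N b by auto
  next
    case False
    then have "x \<in> N" using edge_V[OF e] by simp
    then show ?thesis using edge_N[OF e] St_N St_P b by auto
  qed
qed

lemma ori_St_up: "ori E (St a (a + 1)) = G0"
proof (rule set_eqI)
  fix z :: "'v \<times> 'v"
  obtain x y where z: "z = (x, y)" by force
  have "(x, y) \<in> ori E (St a (a + 1)) \<longleftrightarrow> (x, y) \<in> G0"
  proof (cases "(x, y) \<in> E")
    case e: True
    show ?thesis
    proof (cases "x \<in> P")
      case True
      then show ?thesis using e edge_P[OF e True] St_P[OF True] St_N unfolding G0_def by auto
    next
      case False
      then have "x \<in> N" using edge_V[OF e] by simp
      then show ?thesis using e False edge_N[OF e] St_N St_P unfolding G0_def by auto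
    qed
  next
    case False then show ?thesis unfolding G0_def by simp
  qed
  then show "z \<in> ori E (St a (a + 1)) \<longleftrightarrow> z \<in> G0" using z by simp
qed

lemma ori_St_dn: "ori E (St a (a - 1)) = G0\<inverse>"
proof (rule set_eqI)
  fix z :: "'v \<times> 'v"
  obtain x y where z: "z = (x, y)" by force
  have "(x, y) \<in> ori E (St a (a - 1)) \<longleftrightarrow> (y, x) \<in> G0"
  proof (cases "(x, y) \<in> E")
    case e: True
    then have e2: "(y, x) \<in> E" using symE by blast
    show ?thesis
    proof (cases "x \<in> P")
      case True
      then show ?thesis using e e2 edge_P[OF e True] St_P[OF True] St_N unfolding G0_def by auto
    next
      case False
      then have "x \<in> N" using edge_V[OF e] by simp
      then show ?thesis using e e2 False edge_N[OF e] St_N St_P unfolding G0_def by auto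
    qed
  next
    case False
    then have "(y, x) \<notin> E" using symE by blast
    then show ?thesis using False unfolding G0_def by simp
  qed
  then show "z \<in> ori E (St a (a - 1)) \<longleftrightarrow> z \<in> G0\<inverse>" using z by simp
qed

lemma lift_ps:
  assumes "b = a + 1 \<or> b = a - 1"
  shows "path V E (St a b) ps \<and> lift E (St a b) ps = St (2 * b - a) b"
proof -
  have h3: "\<forall>i\<in>set ps. \<forall>j. (i, j) \<in> E \<longrightarrow> j \<notin> set ps \<and> St a b j = b"
    using ps(1) edge_P St_N by blast
  have h4: "\<forall>i\<in>set ps. St a b i = a" using ps(1) St_P by blast
  have "path V E (St a b) ps \<and> lift E (St a b) ps = (\<lambda>v. if v \<in> set ps then 2 * b - a else St a b v)"
    by (rule sweep[OF ps(2) _ h3 h4 assms]) (use ps(1) VPN in blast)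
  moreover have "(\<lambda>v. if v \<in> set ps then 2 * b - a else St a b v) = St (2 * b - a) b"
    using ps(1) unfolding St_def by auto
  ultimately show ?thesis by simp
qed

lemma lift_ns:
  assumes "b = a + 1 \<or> b = a - 1"
  shows "path V E (St a b) ns \<and> lift E (St a b) ns = St a (2 * a - b)"
proof -
  have h3: "\<forall>i\<in>set ns. \<forall>j. (i, j) \<in> E \<longrightarrow> j \<notin> set ns \<and> St a b j = a"
    using ns(1) edge_N St_P by blast
  have h4: "\<forall>i\<in>set ns. St a b i = b" using ns(1) St_N by blast
  have as: "a = b + 1 \<or> a = b - 1" using assms by auto
  have "path V E (St a b) ns \<and> lift E (St a b) ns = (\<lambda>v. if v \<in> set ns then 2 * a - b else St a b v)"
    by (rule sweep[OF ns(2) _ h3 h4 as]) (use ns(1) VPN in blast)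
  moreover have "(\<lambda>v. if v \<in> set ns then 2 * a - b else St a b v) = St a (2 * a - b)"
    using ns(1) disj unfolding St_def by (auto simp: fun_eq_iff)
  ultimately show ?thesis by simp
qed

lemma cyc_up:
  "path V E (St (2 * m) (2 * m + 1)) (concat (replicate k (ps @ ns))) \<and>
   lift E (St (2 * m) (2 * m + 1)) (concat (replicate k (ps @ ns))) = St (2 * m + 2 * int k) (2 * m + 2 * int k + 1)"
proof (induction k arbitrary: m)
  case 0 then show ?case by simp
next
  case (Suc k)
  have a: "path V E (St (2 * m) (2 * m + 1)) ps \<and> lift E (St (2 * m) (2 * m + 1)) ps = St (2 * m + 2) (2 * m + 1)"
    using lift_ps[of "2 * m + 1" "2 * m"] by (simp add: algebra_simps)
  have b: "path V E (St (2 * m + 2) (2 * m + 1)) ns \<and> lift E (St (2 * m + 2) (2 * m + 1)) ns = St (2 * (m + 1)) (2 * (m + 1) + 1)"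
    using lift_ns[of "2 * m + 1" "2 * m + 2"] by (simp add: algebra_simps)
  have c: "St (2 * (m + 1) + 2 * int k) (2 * (m + 1) + 2 * int k + 1) = St (2 * m + 2 * int (Suc k)) (2 * m + 2 * int (Suc k) + 1)"
    by (simp add: algebra_simps)
  show ?case using a b Suc.IH[of "m + 1"] c by simp
qed

lemma cyc_dn:
  "path V E (St (2 * m) (2 * m + 1)) (concat (replicate k (ns @ ps))) \<and>
   lift E (St (2 * m) (2 * m + 1)) (concat (replicate k (ns @ ps))) = St (2 * m - 2 * int k) (2 * m - 2 * int k + 1)"
proof (induction k arbitrary: m)
  case 0 then show ?case by simp
next
  case (Suc k)
  have a: "path V E (St (2 * m) (2 * m + 1)) ns \<and> lift E (St (2 * m) (2 * m + 1)) ns = St (2 * m) (2 * m - 1)"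
    using lift_ns[of "2 * m + 1" "2 * m"] by (simp add: algebra_simps)
  have b: "path V E (St (2 * m) (2 * m - 1)) ps \<and> lift E (St (2 * m) (2 * m - 1)) ps = St (2 * (m - 1)) (2 * (m - 1) + 1)"
    using lift_ps[of "2 * m - 1" "2 * m"] by (simp add: algebra_simps)
  have c: "St (2 * (m - 1) - 2 * int k) (2 * (m - 1) - 2 * int k + 1) = St (2 * m - 2 * int (Suc k)) (2 * m - 2 * int (Suc k) + 1)"
    by (simp add: algebra_simps)
  show ?case using a b Suc.IH[of "m - 1"] c by simp
qed

end

lemma concat_rep_wd: "concat (replicate K (wd xs)) = wd (concat (replicate K xs))"
  by (induction K) auto

lemma sgs_cc: "sgs (concat (concat (replicate K [x, y]))) = concat (replicate K (sgs x @ sgs y))"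
  by (induction K) auto

lemma nd_cc: "nd (concat (concat (replicate K [x, y]))) = K * (nd x + nd y)"
  by (induction K) auto

lemma set_cc: "set (concat (replicate K [x, y])) \<subseteq> {x, y}"
  by (induction K) auto

context bip
begin

abbreviation "H0 \<equiv> St 0 1"

lemma gdH0: "gd E H0" using gd_St[of 1 0] by simp

lemma oriH0: "ori E H0 = G0" using ori_St_up[of 0] by simp

definition cyc :: "int \<Rightarrow> 'v list" where
  "cyc k = (if 0 \<le> k then concat (replicate (nat k) (ps @ ns)) else concat (replicate (nat (- k)) (ns @ ps)))"

lemma cyc_int: "path V E H0 (cyc k) \<and> lift E H0 (cyc k) = St (2 * k) (2 * k + 1)"
proof (cases "0 \<le> k")
  case True
  then show ?thesis using cyc_up[of 0 "nat k"] unfolding cyc_def by simp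
next
  case False
  then show ?thesis using cyc_dn[of 0 "nat (- k)"] unfolding cyc_def by simp
qed

lemma valid_path_H0: "valid V D G0 (wd xs) \<longleftrightarrow> path V E H0 xs"
  using path_valid[OF gdH0, of D xs] oriH0 by simp

lemma walk_path_H0: "path V E H0 xs \<Longrightarrow> walk G0 (wd xs) = ori E (lift E H0 xs)"
  using path_walk[OF gdH0, of xs] oriH0 by simp

lemma gen_pn: "valid V D G0 (wd ps @ wd ns) \<and> walk G0 (wd ps @ wd ns) = G0"
proof -
  have a: "path V E H0 ps \<and> lift E H0 ps = St 2 1" using lift_ps[of 1 0] by simp
  have b: "path V E (St 2 1) ns \<and> lift E (St 2 1) ns = St 2 3" using lift_ns[of 1 2] by simp
  have p: "path V E H0 (ps @ ns)" and l: "lift E H0 (ps @ ns) = St 2 (2 + 1)" using a b by auto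
  show ?thesis using valid_path_H0[of D "ps @ ns"] walk_path_H0[OF p] p l ori_St_up[of 2] by simp
qed

lemma gen_np: "valid V D G0 (wd ns @ wd ps) \<and> walk G0 (wd ns @ wd ps) = G0"
proof -
  have a: "path V E H0 ns \<and> lift E H0 ns = St 0 (-1)" using lift_ns[of 1 0] by simp
  have b: "path V E (St 0 (-1)) ps \<and> lift E (St 0 (-1)) ps = St (-2) (-1)" using lift_ps[of "-1" 0] by simp
  have p: "path V E H0 (ns @ ps)" and l: "lift E H0 (ns @ ps) = St (-2) (-2 + 1)" using a b by auto
  show ?thesis using valid_path_H0[of D "ns @ ps"] walk_path_H0[OF p] p l ori_St_up[of "-2"] by simp
qed

lemma gen_pD: "valid V True G0 (wd ps @ [(Dg, False)]) \<and> walk G0 (wd ps @ [(Dg, False)]) = G0"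
proof -
  have a: "path V E H0 ps \<and> lift E H0 ps = St 2 (2 - 1)" using lift_ps[of 1 0] by simp
  show ?thesis using valid_path_H0[of True ps] walk_path_H0[of ps] a ori_St_dn[of 2] by simp
qed

lemma gen_nD: "valid V True G0 (wd ns @ [(Dg, False)]) \<and> walk G0 (wd ns @ [(Dg, False)]) = G0"
proof -
  have a: "path V E H0 ns \<and> lift E H0 ns = St 0 (0 - 1)" using lift_ns[of 1 0] by simp
  show ?thesis using valid_path_H0[of True ns] walk_path_H0[of ns] a ori_St_dn[of 0] by simp
qed

lemma key:
  assumes "valid V D G0 w" "walk G0 w = G0"
  shows "path V E H0 (sgs w) \<and>
    (\<exists>k. lift E H0 (sgs w) = (if even (nd w) then St (2 * k) (2 * k + 1) else St (2 * k) (2 * k - 1)))"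
proof -
  let ?is = "sgs w" and ?n = "nd w"
  have nv: "wequiv V E D G0 w (wd ?is @ dp ?n)" using normalize[OF assms(1)] .
  have vw: "valid V D G0 (wd ?is @ dp ?n) \<and> walk G0 (wd ?is @ dp ?n) = G0"
    using wequiv_walk[OF nv assms(1)] assms(2) by simp
  then have pth: "path V E H0 ?is" using valid_path_H0 by simp
  let ?H1 = "lift E H0 ?is"
  have w1: "walk G0 (wd ?is) = ori E ?H1" using walk_path_H0[OF pth] .
  have lp: "gd E ?H1 \<and> (\<forall>v. even (?H1 v - H0 v)) \<and> (\<forall>v. v \<notin> V \<longrightarrow> ?H1 v = H0 v)"
    using lift_props[OF gdH0 pth] .
  have wd: "walk (ori E ?H1) (dp ?n) = G0" using vw w1 by simp
  obtain v0 where v0: "v0 \<in> V" using Vne by blast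
  have H0out: "\<And>v. v \<notin> V \<Longrightarrow> H0 v = 0" unfolding St_def using VPN by auto
  show ?thesis
  proof (cases "even ?n")
    case True
    then have o1: "ori E ?H1 = ori E H0" using wd oriH0 unfolding dp_def by simp
    let ?c = "?H1 v0 - H0 v0"
    have cd: "\<And>v. v \<in> V \<Longrightarrow> ?H1 v - H0 v = ?c"
      using const_diff[OF conn _ gdH0 o1 _ v0] lp by blast
    have "even ?c" using lp by blast
    then obtain k where k: "?c = 2 * k" by (metis evenE)
    have "?H1 = St (2 * k) (2 * k + 1)"
    proof
      fix v show "?H1 v = St (2 * k) (2 * k + 1) v"
      proof (cases "v \<in> V")
        case True
        then have "?H1 v = H0 v + 2 * k" using cd k by (metis diff_add_cancel add.commute)
        then show ?thesis using True VPN unfolding St_def by auto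
      next
        case False
        then show ?thesis using lp H0out VPN unfolding St_def by auto
      qed
    qed
    then show ?thesis using pth True by auto
  next
    case False
    let ?H2 = "\<lambda>v. - H0 v"
    have o1: "ori E ?H1 = ori E ?H2" using wd oriH0 False ori_neg[of H0] unfolding dp_def by auto
    have g2: "gd E ?H2" using gdH0 unfolding gd_def by force
    let ?c = "?H1 v0 - ?H2 v0"
    have cd: "\<And>v. v \<in> V \<Longrightarrow> ?H1 v - ?H2 v = ?c"
      using const_diff[OF conn _ g2 o1 _ v0] lp by blast
    have "even (?H1 v0 - H0 v0)" using lp by blast
    moreover have "?c = (?H1 v0 - H0 v0) + 2 * H0 v0" by simp
    ultimately have "even ?c" by simp
    then obtain k where k: "?c = 2 * k" by (metis evenE)
    have "?H1 = St (2 * k) (2 * k - 1)"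
    proof
      fix v show "?H1 v = St (2 * k) (2 * k - 1) v"
      proof (cases "v \<in> V")
        case True
        then have "?H1 v = 2 * k - H0 v" using cd k by (metis diff_minus_eq_add eq_diff_eq)
        then show ?thesis using True VPN disj unfolding St_def by auto
      next
        case False
        then show ?thesis using lp H0out VPN unfolding St_def by auto
      qed
    qed
    then show ?thesis using pth False by auto
  qed
qed

end

context bip
begin

lemma bip_R0: "generates_aut V E False G0 [wd ns @ wd ps, wd ps @ wd ns]"
  unfolding generates_aut_def
proof (intro conjI allI impI)
  show "\<forall>g\<in>set [wd ns @ wd ps, wd ps @ wd ns]. valid V False G0 g \<and> walk G0 g = G0"
    using gen_np gen_pn by simp
next
  fix w assume a: "valid V False G0 w \<and> walk G0 w = G0"
  have n0: "nd w = 0" using nd_False a by blast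
  obtain k where pth: "path V E H0 (sgs w)" and lk: "lift E H0 (sgs w) = St (2 * k) (2 * k + 1)"
    using key[of False w] a n0 by auto
  define ws where "ws = (if 0 \<le> k then replicate (nat k) (wd ps @ wd ns) else replicate (nat (- k)) (wd ns @ wd ps))"
  have cw: "concat ws = wd (cyc k)"
    unfolding ws_def cyc_def using concat_rep_wd[of _ "ps @ ns"] concat_rep_wd[of _ "ns @ ps"] by simp
  have sub: "set ws \<subseteq> set [wd ns @ wd ps, wd ps @ wd ns] \<union> inv_word ` set [wd ns @ wd ps, wd ps @ wd ns]"
    unfolding ws_def by auto
  have vc: "valid V False G0 (concat ws)"
    using loops_concat[of ws V False G0] sub gen_np gen_pn unfolding ws_def by auto
  have "wequiv V E False (ori E H0) (wd (sgs w)) (wd (cyc k))"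
    using same_lift[OF gdH0 pth, of "cyc k"] cyc_int[of k] lk by simp
  then have "wequiv V E False G0 (wd (sgs w)) (wd (sgs (concat ws)))" using cw oriH0 by simp
  then have "wequiv V E False G0 w (concat ws)"
    using finish[of V False G0 w "concat ws" E] a vc n0 cw by simp
  then show "\<exists>ws. set ws \<subseteq> set [wd ns @ wd ps, wd ps @ wd ns] \<union> inv_word ` set [wd ns @ wd ps, wd ps @ wd ns]
      \<and> wequiv V E False G0 w (concat ws)" using sub by blast
qed

lemma bip_R: "generates_aut V E True G0 [wd ps @ [(Dg, False)], wd ns @ [(Dg, False)]]"
  unfolding generates_aut_def
proof (intro conjI allI impI)
  let ?g1 = "wd ps @ [(Dg, False)]" and ?g2 = "wd ns @ [(Dg, False)]"
  show "\<forall>g\<in>set [?g1, ?g2]. valid V True G0 g \<and> walk G0 g = G0"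
    using gen_pD gen_nD by simp
next
  let ?g1 = "wd ps @ [(Dg, False)]" and ?g2 = "wd ns @ [(Dg, False)]"
  fix w assume a: "valid V True G0 w \<and> walk G0 w = G0"
  obtain k where pth: "path V E H0 (sgs w)"
    and lk: "lift E H0 (sgs w) = (if even (nd w) then St (2 * k) (2 * k + 1) else St (2 * k) (2 * k - 1))"
    using key[of True w] a by auto
  define k' where "k' = (if even (nd w) then k else k - 1)"
  define wsb where "wsb = (if 0 \<le> k' then concat (replicate (nat k') [?g1, ?g2]) else concat (replicate (nat (- k')) [?g2, ?g1]))"
  define ws where "ws = wsb @ (if even (nd w) then [] else [?g1])"
  have s1: "sgs (concat wsb) = cyc k'" unfolding wsb_def cyc_def by (simp add: sgs_cc)
  have n1: "even (nd (concat wsb))" unfolding wsb_def by (simp add: nd_cc)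
  have s2: "sgs (concat ws) = cyc k' @ (if even (nd w) then [] else ps)" unfolding ws_def using s1 by simp
  have n2: "even (nd (concat ws)) = even (nd w)" unfolding ws_def using n1 by simp
  have sub0: "set wsb \<subseteq> {?g1, ?g2}" unfolding wsb_def using set_cc by auto
  have sub: "set ws \<subseteq> set [?g1, ?g2] \<union> inv_word ` set [?g1, ?g2]"
    unfolding ws_def using sub0 by auto
  have sub': "set ws \<subseteq> {?g1, ?g2}" unfolding ws_def using sub0 by auto
  have gl: "\<forall>g\<in>set ws. valid V True G0 g \<and> walk G0 g = G0"
  proof
    fix g assume "g \<in> set ws"
    then have "g = ?g1 \<or> g = ?g2" using sub' by blast
    then show "valid V True G0 g \<and> walk G0 g = G0" using gen_pD gen_nD by blast
  qed
  have vc: "valid V True G0 (concat ws)" using loops_concat[OF gl] by blast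
  have ck: "path V E H0 (cyc k') \<and> lift E H0 (cyc k') = St (2 * k') (2 * k' + 1)" using cyc_int .
  have pl: "path V E H0 (sgs (concat ws)) \<and> lift E H0 (sgs (concat ws)) = lift E H0 (sgs w)"
  proof (cases "even (nd w)")
    case True
    then show ?thesis using ck s2 lk unfolding k'_def by simp
  next
    case False
    have "path V E (St (2 * k') (2 * k' + 1)) ps \<and> lift E (St (2 * k') (2 * k' + 1)) ps = St (2 * (2 * k' + 1) - 2 * k') (2 * k' + 1)"
      using lift_ps[of "2 * k' + 1" "2 * k'"] by simp
    moreover have "St (2 * (2 * k' + 1) - 2 * k') (2 * k' + 1) = St (2 * k) (2 * k - 1)"
      unfolding k'_def using False by (simp add: algebra_simps)
    ultimately show ?thesis using ck s2 lk False by simp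
  qed
  have "wequiv V E True (ori E H0) (wd (sgs w)) (wd (sgs (concat ws)))"
    using same_lift[OF gdH0 pth, of "sgs (concat ws)"] pl by simp
  then have "wequiv V E True G0 (wd (sgs w)) (wd (sgs (concat ws)))" using oriH0 by simp
  then have "wequiv V E True G0 w (concat ws)"
    using finish[of V True G0 w "concat ws" E] a vc n2 by simp
  then show "\<exists>ws. set ws \<subseteq> set [?g1, ?g2] \<union> inv_word ` set [?g1, ?g2]
      \<and> wequiv V E True G0 w (concat ws)" using sub by blast
qed

end

lemma refl_at_empty[simp]: "refl_at i {} = {}"
  unfolding refl_at_def by simp

lemma walk_empty[simp]: "walk {} w = {}"
proof (induction w)
  case (Cons x w)
  obtain g b where x: "x = (g, b)" by force
  then show ?case using Cons by (cases g) auto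
qed simp

lemma sgs_sub: "valid V D {} w \<Longrightarrow> set (sgs w) \<subseteq> V"
proof (induction w)
  case (Cons x w)
  obtain g b where x: "x = (g, b)" by force
  then show ?case using Cons by (cases g) (auto simp: is_source_def is_sink_def)
qed simp

lemma sv_red:
  assumes "V = {v}"
  shows "set xs \<subseteq> {v} \<Longrightarrow> wequiv V E D {} (wd xs) (wd (replicate (length xs mod 2) v))"
proof (induction xs rule: induct_list012)
  case 1 then show ?case by simp
next
  case (2 x) then show ?case by simp
next
  case (3 x y rest)
  have xy: "x = v" "y = v" using 3 by auto
  have r: "rel V E D (walk {} []) [(Sg v, False), (Sg v, False)] []"
    by (rule rel_R1) (simp add: assms is_source_def)
  have vr: "valid V D {} (wd rest)"
  proof -
    have "set rest \<subseteq> {v}" using 3 by simp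
    then show ?thesis
    proof (induction rest)
      case (Cons z zs) then show ?case by (simp add: assms is_source_def)
    qed simp
  qed
  have v: "valid V D {} ([] @ [(Sg v, False), (Sg v, False)] @ wd rest)"
    using vr by (simp add: assms is_source_def)
  have e1: "wequiv V E D {} (wd (x # y # rest)) (wd rest)" using rel_wequiv[OF r v] xy by simp
  have e2: "wequiv V E D {} (wd rest) (wd (replicate (length rest mod 2) v))" using 3 by simp
  have "length (x # y # rest) mod 2 = length rest mod 2" by simp
  then show ?case using wequiv_trans[OF e1 e2] by simp
qed

lemma sv_eq:
  assumes "V = {v}" "set xs \<subseteq> {v}" "set ys \<subseteq> {v}" "length xs mod 2 = length ys mod 2"
  shows "wequiv V E D {} (wd xs) (wd ys)"
proof -
  have a: "wequiv V E D {} (wd xs) (wd (replicate (length ys mod 2) v))"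
    using sv_red[OF assms(1,2)] assms(4) by simp
  show ?thesis using wequiv_trans[OF a wequiv_sym[OF sv_red[OF assms(1,3)]]] .
qed

lemma distinct_single: "set xs = {v} \<Longrightarrow> distinct xs \<Longrightarrow> xs = [v]"
  by (cases xs) (auto simp: subset_singleton_iff)

lemma sv_main:
  assumes V: "V = {v}" and "V = P \<union> N" "P \<inter> N = {}"
    and "set ps = P" "distinct ps" "set ns = N" "distinct ns"
  shows "generates_aut V E False {} [wd ns @ wd ps, wd ps @ wd ns]
       \<and> generates_aut V E True {} [wd ps @ [(Dg, False)], wd ns @ [(Dg, False)]]"
proof -
  have pn: "(ps = [v] \<and> ns = []) \<or> (ps = [] \<and> ns = [v])"
  proof (cases "v \<in> P")
    case True
    then have "P = {v}" "N = {}" using assms(1-3) by auto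
    then show ?thesis using assms(4-7) distinct_single by auto
  next
    case False
    then have "N = {v}" "P = {}" using assms(1-3) by auto
    then show ?thesis using assms(4-7) distinct_single by auto
  qed
  let ?s = "[(Sg v, False)]" and ?gA = "[(Sg v, False), (Dg, False)]" and ?gB = "[(Dg, False)]"
  have g0: "wd ns @ wd ps = ?s" "wd ps @ wd ns = ?s" using pn by auto
  have g1: "set [wd ps @ [(Dg, False)], wd ns @ [(Dg, False)]] = {?gA, ?gB}" using pn by auto
  have vs: "valid V D {} ?s" for D by (simp add: V is_source_def)
  have vA: "valid V True {} ?gA" by (simp add: V is_source_def)
  have vB: "valid V True {} ?gB" by simp
  have A: "generates_aut V E False {} [?s, ?s]"
    unfolding generates_aut_def
  proof (intro conjI allI impI)
    show "\<forall>g\<in>set [?s, ?s]. valid V False {} g \<and> walk {} g = {}" using vs by simp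
  next
    fix w assume a: "valid V False {} w \<and> walk {} w = {}"
    define e where "e = length (sgs w) mod 2"
    define ws where "ws = replicate e ?s"
    have cw: "concat ws = wd (replicate e v)" unfolding ws_def
      by (induction e) auto
    have vc: "valid V False {} (concat ws)"
      using loops_concat[of ws V False "{}"] vs unfolding ws_def by auto
    have r: "set (replicate e v) \<subseteq> {v}" by auto
    have "wequiv V E False {} (wd (sgs w)) (wd (replicate e v))"
      using sv_eq[OF V _ r, of "sgs w" E False] sgs_sub[of V False w] a V
      unfolding e_def by auto
    then have "wequiv V E False {} (wd (sgs w)) (wd (sgs (concat ws)))" using cw by simp
    then have "wequiv V E False {} w (concat ws)"
      using finish[of V False "{}" w "concat ws" E] a vc nd_False[of V "{}" w] cw by simp
    moreover have "set ws \<subseteq> set [?s, ?s] \<union> inv_word ` set [?s, ?s]" unfolding ws_def by auto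
    ultimately show "\<exists>ws. set ws \<subseteq> set [?s, ?s] \<union> inv_word ` set [?s, ?s] \<and> wequiv V E False {} w (concat ws)"
      by blast
  qed
  have B: "generates_aut V E True {} [wd ps @ [(Dg, False)], wd ns @ [(Dg, False)]]"
    unfolding generates_aut_def g1
  proof (intro conjI allI impI)
    show "\<forall>g\<in>{?gA, ?gB}. valid V True {} g \<and> walk {} g = {}" using vA vB by simp
  next
    fix w assume a: "valid V True {} w \<and> walk {} w = {}"
    define e where "e = length (sgs w) mod 2"
    define f where "f = (if even (nd w) = even e then 0 else (1::nat))"
    define ws where "ws = replicate e ?gA @ replicate f ?gB"
    have s: "sgs (concat ws) = replicate e v" unfolding ws_def
    proof -
      have "sgs (concat (replicate e ?gA)) = replicate e v" by (induction e) auto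
      moreover have "sgs (concat (replicate f ?gB)) = []" by (induction f) auto
      ultimately show "sgs (concat (replicate e ?gA @ replicate f ?gB)) = replicate e v" by simp
    qed
    have n: "nd (concat ws) = e + f" unfolding ws_def
    proof -
      have "nd (concat (replicate e ?gA)) = e" by (induction e) auto
      moreover have "nd (concat (replicate f ?gB)) = f" by (induction f) auto
      ultimately show "nd (concat (replicate e ?gA @ replicate f ?gB)) = e + f" by simp
    qed
    have par: "even (nd w) = even (nd (concat ws))" unfolding n f_def by auto
    have sub: "set ws \<subseteq> {?gA, ?gB}" unfolding ws_def by auto
    have vc: "valid V True {} (concat ws)"
    proof -
      have "\<forall>g\<in>set ws. valid V True {} g \<and> walk {} g = {}" using sub vA vB by auto
      then show ?thesis using loops_concat by blast
    qed
    have r: "set (replicate e v) \<subseteq> {v}" by auto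
    have "wequiv V E True {} (wd (sgs w)) (wd (replicate e v))"
      using sv_eq[OF V _ r, of "sgs w" E True] sgs_sub[of V True w] a V
      unfolding e_def by auto
    then have "wequiv V E True {} (wd (sgs w)) (wd (sgs (concat ws)))" using s by simp
    then have "wequiv V E True {} w (concat ws)"
      using finish[of V True "{}" w "concat ws" E] a vc par by simp
    then show "\<exists>ws. set ws \<subseteq> {?gA, ?gB} \<union> inv_word ` {?gA, ?gB} \<and> wequiv V E True {} w (concat ws)"
      using sub by blast
  qed
  show ?thesis using A B g0 by simp
qed

theorem mainTheorem13:
  fixes V :: "'v set" and E :: "('v \<times> 'v) set" and P N :: "'v set" and ps ns :: "'v list"
  assumes "is_tree V E"
    and "V = P \<union> N" and "P \<inter> N = {}"
    and "\<forall>a\<in>P. \<forall>b\<in>P. (a, b) \<notin> E" and "\<forall>a\<in>N. \<forall>b\<in>N. (a, b) \<notin> E"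
    and "set ps = P" and "distinct ps" and "set ns = N" and "distinct ns"
  defines "\<Gamma>0 \<equiv> {(a, b). (a, b) \<in> E \<and> a \<in> P}"
    and "Splus \<equiv> map (\<lambda>i. (Sg i, False)) ps"
    and "Sminus \<equiv> map (\<lambda>i. (Sg i, False)) ns"
  shows "generates_aut V E False \<Gamma>0 [Sminus @ Splus, Splus @ Sminus]
       \<and> generates_aut V E True \<Gamma>0 [Splus @ [(Dg, False)], Sminus @ [(Dg, False)]]"
proof -
  have fin: "finite V" and EV: "E \<subseteq> V \<times> V" and sy: "sym E" and irr: "\<forall>v. (v, v) \<notin> E"
    and Vne: "V \<noteq> {}" and conn: "\<forall>u\<in>V. \<forall>v\<in>V. (u, v) \<in> E\<^sup>*"
    using assms(1) unfolding is_tree_def simple_graph_def by auto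
  have Sp: "Splus = wd ps" unfolding Splus_def wd_def ..
  have Sm: "Sminus = wd ns" unfolding Sminus_def wd_def ..
  show ?thesis
  proof (cases "\<forall>v\<in>V. \<exists>u. (v, u) \<in> E")
    case True
    have tcI: "tc V E"
    proof
      show "finite V" by (rule fin)
      show "E \<subseteq> V \<times> V" by (rule EV)
      show "\<And>a b. (a, b) \<in> E \<Longrightarrow> (b, a) \<in> E" using sy by (blast dest: symD)
      show "\<And>v. (v, v) \<notin> E" using irr by blast
      show "\<And>v. v \<in> V \<Longrightarrow> \<exists>u. (v, u) \<in> E" using True by blast
    qed
    interpret b: bip V E P N ps ns
      by (rule bip.intro[OF tcI], unfold_locales) (use assms(2-9) Vne conn in auto)
    have G: "\<Gamma>0 = b.G0" unfolding \<Gamma>0_def b.G0_def ..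
    show ?thesis using b.bip_R0 b.bip_R Sp Sm G by simp
  next
    case False
    then obtain v where vV: "v \<in> V" and iso: "\<And>u. (v, u) \<notin> E" by blast
    have V1: "V = {v}"
    proof
      show "V \<subseteq> {v}"
      proof
        fix u assume uV: "u \<in> V"
        have "(v, u) \<in> E\<^sup>*" using conn vV uV by blast
        then show "u \<in> {v}"
          by (cases rule: converse_rtranclE) (use iso in auto)
      qed
    qed (use vV in simp)
    have E0: "E = {}" using EV irr V1 by auto
    have G: "\<Gamma>0 = {}" unfolding \<Gamma>0_def E0 by simp
    show ?thesis using sv_main[OF V1 assms(2,3,6-9), of E] Sp Sm G by simp
  qed
qed

end
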